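(* There exist a constant $c_0\in(0,1)$ and a 1-sided error, nonadaptive, $t$-online-erasure-resilient $\varepsilon$-tester for linearity of functions $f:\{0,1\}^d\to\{0,1\}$ that is correct whenever $t\le c_0\cdot\varepsilon^{5/4}\cdot 2^{d/4}$ and makes $O\big(\frac1\varepsilon\log\frac t\varepsilon\big)$ queries.
   Context: Online-erasure model. An input is a function $f:D\to R$ on a finite domain $D$. An algorithm accesses $f$ only through an oracle $\mathcal{O}$ by querying points $x\in D$ one at a time and receiving $\mathcal{O}(x)$. Initially $\mathcal{O}(x)=f(x)$ for all $x\in D$. For $t\in\mathbb{N}$, a $t$-online-erasure oracle, after answering each query, may choose up to $t$ points $x\in D$ and set $\mathcal{O}(x)=\perp$ (a special "erased" symbol); these values are used to answer all future queries. The choice of erasures (the adversarial strategy) may depend on $f$, on the queries and answers so far, and on the algorithm's code, but not on the algorithm's future random coins; the algorithm does not know where erasures are. A property $\mathcal{P}$ is a set of functions; $f$ is $\varepsilon$-far from $\mathcal{P}$ if for every $g\in\mathcal{P}$, $f$ and $g$ differ on at least an $\varepsilon$ fraction of $D$. A $t$-online-erasure-resilient $\varepsilon$-tester for $\mathcal{P}$ is a randomized algorithm that, given $t,\varepsilon$ and access to $f$ via a $t$-online-erasure oracle, for every adversarial strategy accepts with probability at least $2/3$ if $f\in\mathcal{P}$ and rejects with probability at least $2/3$ if $f$ is $\varepsilon$-far from $\mathcal{P}$. It has 1-sided error if it accepts every $f\in\mathcal{P}$ with probability 1; it is nonadaptive if its queries do not depend on answers to previous queries. A function $f:\{0,1\}^d\to\{0,1\}$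 is linear if there is $S\subseteq[d]$ with $f(x)=\sum_{i\in S}x[i]\bmod 2$ for all $x$. *)

theory Defs
  imports "HOL-Probability.Probability"
begin

definition cube :: "nat \<Rightarrow> bool list set" where
  "cube d = {x. length x = d}"

definition linear_fn :: "nat \<Rightarrow> (bool list \<Rightarrow> bool) \<Rightarrow> bool" where
  "linear_fn d f \<longleftrightarrow> (\<exists>S \<subseteq> {..<d}. \<forall>x\<in>cube d. f x = odd (card {i\<in>S. x ! i}))"

definition eps_far :: "nat \<Rightarrow> real \<Rightarrow> (bool list \<Rightarrow> bool) \<Rightarrow> bool" where
  "eps_far d \<epsilon> f \<longleftrightarrow>
     (\<forall>g. linear_fn d g \<longrightarrow> real (card {x\<in>cube d. f x \<noteq> g x}) \<ge> \<epsilon> * real (card (cube d)))"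

text \<open>A history: the queries so far with their answers (None = erased symbol).\<close>
type_synonym history = "(bool list \<times> bool option) list"

text \<open>Running the online-erasure oracle on a (nonadaptive) query sequence.
  E is the set of erased points; after answering each query the adversary
  sees the history and erases the set adv h'.\<close>
fun oracle_run :: "(bool list \<Rightarrow> bool) \<Rightarrow> (history \<Rightarrow> bool list set) \<Rightarrow> bool list list
                   \<Rightarrow> history \<Rightarrow> bool list set \<Rightarrow> history" where
  "oracle_run f adv [] h E = h"
| "oracle_run f adv (q # qs) h E =
     (let h' = h @ [(q, if q \<in> E then None else Some (f q))]
      in oracle_run f adv qs h' (E \<union> adv h'))"

definition answers :: "(bool list \<Rightarrow> bool) \<Rightarrow> (history \<Rightarrow> bool list set) \<Rightarrow> bool list list
                       \<Rightarrow> bool option list" where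
  "answers f adv qs = map snd (oracle_run f adv qs [] {})"

definition erasure_adversary :: "nat \<Rightarrow> nat \<Rightarrow> (history \<Rightarrow> bool list set) \<Rightarrow> bool" where
  "erasure_adversary d t adv \<longleftrightarrow> (\<forall>h. adv h \<subseteq> cube d \<and> finite (adv h) \<and> card (adv h) \<le> t)"

text \<open>A randomized nonadaptive algorithm: a distribution over (query sequence, decision rule
  applied to the answer sequence). True = accept.\<close>
type_synonym nonadaptive_tester = "(bool list list \<times> (bool option list \<Rightarrow> bool)) pmf"

definition accept_prob :: "nonadaptive_tester \<Rightarrow> (bool list \<Rightarrow> bool) \<Rightarrow> (history \<Rightarrow> bool list set) \<Rightarrow> real" where
  "accept_prob T f adv = measure_pmf.prob T {(qs, dec). dec (answers f adv qs)}"

definition one_sided_oer_linearity_tester :: "nat \<Rightarrow> nat \<Rightarrow> real \<Rightarrow> nonadaptive_tester \<Rightarrow> bool" where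
  "one_sided_oer_linearity_tester d t \<epsilon> T \<longleftrightarrow>
     (\<forall>qd\<in>set_pmf T. set (fst qd) \<subseteq> cube d) \<and>
     (\<forall>f adv. erasure_adversary d t adv \<longrightarrow> linear_fn d f \<longrightarrow> accept_prob T f adv = 1) \<and>
     (\<forall>f adv. erasure_adversary d t adv \<longrightarrow> eps_far d \<epsilon> f \<longrightarrow> accept_prob T f adv \<le> 1/3)"

end

theory Submission
  imports Defs
begin

definition sg :: "bool \<Rightarrow> real" where "sg b = (if b then -1 else 1)"
definition chi :: "nat set \<Rightarrow> bool list \<Rightarrow> real" where "chi T x = (\<Prod>i\<in>T. sg (x!i))"
definition LL :: "nat \<Rightarrow> nat \<Rightarrow> bool list list set" where "LL d k = {xs. length xs = k \<and> set xs \<subseteq> cube d}"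
definition vS :: "nat \<Rightarrow> nat set \<Rightarrow> bool list list \<Rightarrow> bool list" where
  "vS d S xs = map (\<lambda>j. odd (card {i\<in>S. xs!i!j})) [0..<d]"

lemma sg_sq[simp]: "sg b * sg b = 1" by (simp add: sg_def)
lemma sg_cases: "sg b = 1 \<or> sg b = -1" by (simp add: sg_def)

lemma sg_parity: "finite A \<Longrightarrow> sg (odd (card {i\<in>A. P i})) = (\<Prod>i\<in>A. sg (P i))"
proof (induction A rule: finite_induct)
  case empty then show ?case by (simp add: sg_def)
next
  case (insert a A)
  have fin: "finite {i\<in>A. P i}" using insert by simp
  show ?case
  proof (cases "P a")
    case True
    then have "{i\<in>insert a A. P i} = insert a {i\<in>A. P i}" by auto
    then have c: "card {i\<in>insert a A. P i} = Suc (card {i\<in>A. P i})" using insert fin by simp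
    have "(\<Prod>i\<in>insert a A. sg (P i)) = sg (P a) * (\<Prod>i\<in>A. sg (P i))"
      using insert by simp
    then show ?thesis using True by (simp only: c insert(3)[symmetric]) (simp add: sg_def)
  next
    case False
    then have "{i\<in>insert a A. P i} = {i\<in>A. P i}" by auto
    then show ?thesis using insert False by (simp add: sg_def)
  qed
qed

lemma finite_cube[simp]: "finite (cube d)"
proof -
  have "cube d = {xs. set xs \<subseteq> (UNIV::bool set) \<and> length xs = d}" by (auto simp: cube_def)
  then show ?thesis using finite_lists_length_eq[of "UNIV::bool set" d] by simp
qed

lemma card_cube: "card (cube d) = 2^d"
proof -
  have "cube d = {xs. set xs \<subseteq> (UNIV::bool set) \<and> length xs = d}" by (auto simp: cube_def)
  then show ?thesis using card_lists_length_eq[of "UNIV::bool set" d] by simp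
qed

lemma chi_vS:
  assumes "T \<subseteq> {..<d}" "finite S"
  shows "chi T (vS d S xs) = (\<Prod>i\<in>S. chi T (xs!i))"
proof -
  have "chi T (vS d S xs) = (\<Prod>j\<in>T. sg (odd (card {i\<in>S. xs!i!j})))"
    unfolding chi_def vS_def using assms(1) by (intro prod.cong) auto
  also have "\<dots> = (\<Prod>j\<in>T. \<Prod>i\<in>S. sg (xs!i!j))"
    using assms(2) by (simp add: sg_parity)
  also have "\<dots> = (\<Prod>i\<in>S. \<Prod>j\<in>T. sg (xs!i!j))" by (rule prod.swap)
  finally show ?thesis by (simp add: chi_def)
qed

lemma orth:
  assumes "x \<in> cube d" "y \<in> cube d"
  shows "(\<Sum>T\<in>Pow {..<d}. chi T x * chi T y) = (if x = y then 2^d else 0)"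
proof -
  have "(\<Prod>i\<in>{..<d}. sg (x!i) * sg (y!i) + 1) =
        (\<Sum>T\<in>Pow {..<d}. (\<Prod>i\<in>T. sg (x!i) * sg (y!i)) * (\<Prod>i\<in>{..<d}-T. 1))"
    by (rule prod_add) simp
  also have "\<dots> = (\<Sum>T\<in>Pow {..<d}. chi T x * chi T y)"
    by (simp add: chi_def prod.distrib)
  finally have e: "(\<Sum>T\<in>Pow {..<d}. chi T x * chi T y) = (\<Prod>i\<in>{..<d}. sg (x!i) * sg (y!i) + 1)" ..
  show ?thesis
  proof (cases "x = y")
    case True
    then show ?thesis using e by simp
  next
    case False
    have "length x = d" "length y = d" using assms by (auto simp: cube_def)
    then have "\<exists>i<d. x!i \<noteq> y!i" using False nth_equalityI[of x y] by auto
    then obtain i where i: "i < d" "x!i \<noteq> y!i" by blast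
    then have z: "sg (x!i) * sg (y!i) + 1 = 0" by (auto simp: sg_def)
    have "(\<Prod>i\<in>{..<d}. sg (x!i) * sg (y!i) + 1) = 0"
      by (rule prod_zero) (simp, rule bexI[of _ i], use i z in auto)
    then show ?thesis using e False by simp
  qed
qed

lemma LL_Suc: "LL d (Suc k) = (\<lambda>(x,xs). x#xs) ` (cube d \<times> LL d k)"
proof (rule set_eqI)
  fix ys show "ys \<in> LL d (Suc k) \<longleftrightarrow> ys \<in> (\<lambda>(x,xs). x#xs) ` (cube d \<times> LL d k)"
    by (cases ys) (auto simp: LL_def)
qed

lemma LL_0: "LL d 0 = {[]}" by (auto simp: LL_def)

lemma finite_LL[simp]: "finite (LL d k)"
  by (induction k) (auto simp: LL_0 LL_Suc)

lemma card_LL: "card (LL d k) = (2^d)^k"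
proof (induction k)
  case 0 then show ?case by (simp add: LL_0)
next
  case (Suc k)
  have "inj_on (\<lambda>(x,xs). x#xs) (cube d \<times> LL d k)" by (auto simp: inj_on_def)
  then show ?case using Suc by (simp add: LL_Suc card_image card_cartesian_product card_cube)
qed

lemma sum_LL_Suc: "(\<Sum>ys\<in>LL d (Suc k). g ys) = (\<Sum>x\<in>cube d. \<Sum>xs\<in>LL d k. g (x#xs))"
proof -
  have inj: "inj_on (\<lambda>(x,xs). x#xs) (cube d \<times> LL d k)" by (auto simp: inj_on_def)
  have "(\<Sum>ys\<in>LL d (Suc k). g ys) = (\<Sum>p\<in>cube d \<times> LL d k. g (fst p # snd p))"
    unfolding LL_Suc by (subst sum.reindex[OF inj]) (auto intro!: sum.cong)
  also have "\<dots> = (\<Sum>(x,xs)\<in>cube d \<times> LL d k. g (x#xs))"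
    by (simp add: case_prod_beta)
  also have "\<dots> = (\<Sum>x\<in>cube d. \<Sum>xs\<in>LL d k. g (x#xs))"
    by (rule sum.cartesian_product[symmetric])
  finally show ?thesis .
qed

lemma sum_prod_LL:
  "(\<Sum>xs\<in>LL d k. \<Prod>i<k. h i (xs!i)) = (\<Prod>i<k. \<Sum>x\<in>cube d. (h i x :: real))"
proof (induction k arbitrary: h)
  case 0 then show ?case by (simp add: LL_0)
next
  case (Suc k)
  have "(\<Sum>xs\<in>LL d (Suc k). \<Prod>i<Suc k. h i (xs!i))
      = (\<Sum>x\<in>cube d. \<Sum>xs\<in>LL d k. h 0 x * (\<Prod>i<k. h (Suc i) (xs!i)))"
    by (simp only: sum_LL_Suc prod.lessThan_Suc_shift nth_Cons_0 nth_Cons_Suc)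
  also have "\<dots> = (\<Sum>x\<in>cube d. h 0 x * (\<Prod>i<k. \<Sum>y\<in>cube d. h (Suc i) y))"
    by (simp add: sum_distrib_left[symmetric] Suc.IH[of "\<lambda>i. h (Suc i)"])
  also have "\<dots> = (\<Prod>i<Suc k. \<Sum>x\<in>cube d. h i x)"
    by (simp only: prod.lessThan_Suc_shift sum_distrib_right)
  finally show ?case .
qed

definition fh :: "nat \<Rightarrow> (bool list \<Rightarrow> real) \<Rightarrow> nat set \<Rightarrow> real" where
  "fh d F T = (\<Sum>x\<in>cube d. F x * chi T x) / 2^d"

lemma chi_sym_sum: "x \<in> cube d \<Longrightarrow> (\<Sum>y\<in>cube d. G y * (if y = x then 2^d else 0)) = (2::real)^d * G x"
  by (simp add: if_distrib sum.delta' cong: if_cong)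

lemma inversion:
  assumes "x \<in> cube d"
  shows "(\<Sum>T\<in>Pow {..<d}. fh d F T * chi T x) = F x"
proof -
  have "(\<Sum>T\<in>Pow {..<d}. fh d F T * chi T x)
     = (\<Sum>T\<in>Pow {..<d}. \<Sum>y\<in>cube d. F y * (chi T y * chi T x) / 2^d)"
    by (simp add: fh_def sum_divide_distrib sum_distrib_right mult.assoc)
  also have "\<dots> = (\<Sum>y\<in>cube d. (F y / 2^d) * (\<Sum>T\<in>Pow {..<d}. chi T y * chi T x))"
    by (subst sum.swap) (simp add: sum_distrib_left)
  also have "\<dots> = (\<Sum>y\<in>cube d. (F y / 2^d) * (if y = x then 2^d else 0))"
    by (intro sum.cong refl) (simp add: orth assms)
  also have "\<dots> = F x" using chi_sym_sum[OF assms, of "\<lambda>y. F y / 2^d"] by simp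
  finally show ?thesis .
qed

lemma parseval:
  assumes "\<And>x. x \<in> cube d \<Longrightarrow> F x * F x = 1"
  shows "(\<Sum>T\<in>Pow {..<d}. fh d F T * fh d F T) = 1"
proof -
  have "(\<Sum>T\<in>Pow {..<d}. fh d F T * fh d F T)
      = (\<Sum>T\<in>Pow {..<d}. \<Sum>x\<in>cube d. fh d F T * (F x * chi T x) / 2^d)"
    by (simp add: fh_def sum_divide_distrib sum_distrib_left)
  also have "\<dots> = (\<Sum>x\<in>cube d. F x / 2^d * (\<Sum>T\<in>Pow {..<d}. fh d F T * chi T x))"
    by (subst sum.swap) (simp add: sum_distrib_left mult_ac)
  also have "\<dots> = (\<Sum>x\<in>cube d. F x * F x / 2^d)"
    by (intro sum.cong refl) (simp add: inversion)
  also have "\<dots> = (\<Sum>x\<in>cube d. 1 / 2^d)" by (intro sum.cong) (simp_all add: assms)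
  also have "\<dots> = 1" by (simp add: card_cube)
  finally show ?thesis .
qed

lemma vS_cube[simp]: "vS d S xs \<in> cube d" by (simp add: vS_def cube_def)

lemma LL_nth_cube: "xs \<in> LL d k \<Longrightarrow> i < k \<Longrightarrow> xs!i \<in> cube d"
  by (auto simp: LL_def)

lemma prod_If_const: "finite A \<Longrightarrow> S \<subseteq> A \<Longrightarrow>
   (\<Prod>i\<in>A. if i \<in> S then a else b) = a ^ card S * b ^ (card A - card S)"
proof -
  assume A: "finite A" "S \<subseteq> A"
  have "(\<Prod>i\<in>A. if i \<in> S then a else b) = (\<Prod>i\<in>A \<inter> {x. x\<in>S}. a) * (\<Prod>i\<in>A \<inter> - {x. x\<in>S}. b)"
    using prod.If_cases[OF A(1), of "\<lambda>i. i\<in>S" "\<lambda>_. a" "\<lambda>_. b"] by simp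
  also have "A \<inter> {x. x\<in>S} = S" using A by auto
  also have "A \<inter> - {x. x\<in>S} = A - S" by auto
  finally show ?thesis using A by (simp add: card_Diff_subset finite_subset)
qed

lemma sum_prod_S:
  assumes "S \<subseteq> {..<k}"
  shows "(\<Sum>xs\<in>LL d k. \<Prod>i\<in>S. g (xs!i)) = (\<Sum>x\<in>cube d. (g x::real)) ^ card S * (2^d) ^ (k - card S)"
proof -
  have "(\<Sum>xs\<in>LL d k. \<Prod>i\<in>S. g (xs!i)) = (\<Sum>xs\<in>LL d k. \<Prod>i<k. (\<lambda>i x. if i \<in> S then g x else 1) i (xs!i))"
  proof (intro sum.cong refl)
    fix xs
    have "(\<Prod>i<k. if i \<in> S then g (xs!i) else 1) = (\<Prod>i\<in>{..<k} \<inter> S. g (xs!i))"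
      by (rule prod.inter_restrict[symmetric]) simp
    also have "{..<k} \<inter> S = S" using assms by auto
    finally show "(\<Prod>i\<in>S. g (xs!i)) = (\<Prod>i<k. (\<lambda>i x. if i \<in> S then g x else 1) i (xs!i))" by simp
  qed
  also have "\<dots> = (\<Prod>i<k. \<Sum>x\<in>cube d. (\<lambda>i x. if i \<in> S then g x else 1) i x)"
    by (rule sum_prod_LL)
  also have "\<dots> = (\<Prod>i<k. if i \<in> S then (\<Sum>x\<in>cube d. g x) else 2^d)"
    by (intro prod.cong refl) (simp add: card_cube)
  also have "\<dots> = (\<Sum>x\<in>cube d. g x) ^ card S * (2^d) ^ (k - card S)"
    using assms by (subst prod_If_const) auto
  finally show ?thesis .
qed

lemma main_identity:
  assumes "S \<subseteq> {..<k}"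
  shows "(\<Sum>xs\<in>LL d k. (\<Prod>i\<in>S. F (xs!i)) * F (vS d S xs))
       = (2^d)^k * (\<Sum>T\<in>Pow {..<d}. fh d F T ^ (card S + 1))"
proof -
  have finS: "finite S" using assms finite_subset by blast
  have "(\<Sum>xs\<in>LL d k. (\<Prod>i\<in>S. F (xs!i)) * F (vS d S xs))
      = (\<Sum>xs\<in>LL d k. \<Sum>T\<in>Pow {..<d}. fh d F T * (\<Prod>i\<in>S. F (xs!i) * chi T (xs!i)))"
  proof (intro sum.cong refl)
    fix xs
    have "F (vS d S xs) = (\<Sum>T\<in>Pow {..<d}. fh d F T * chi T (vS d S xs))"
      by (simp add: inversion)
    also have "\<dots> = (\<Sum>T\<in>Pow {..<d}. fh d F T * (\<Prod>i\<in>S. chi T (xs!i)))"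
      using finS by (intro sum.cong refl) (simp add: chi_vS)
    finally show "(\<Prod>i\<in>S. F (xs!i)) * F (vS d S xs) =
       (\<Sum>T\<in>Pow {..<d}. fh d F T * (\<Prod>i\<in>S. F (xs!i) * chi T (xs!i)))"
      by (simp add: sum_distrib_left prod.distrib mult_ac)
  qed
  also have "\<dots> = (\<Sum>T\<in>Pow {..<d}. fh d F T * (\<Sum>xs\<in>LL d k. \<Prod>i\<in>S. F (xs!i) * chi T (xs!i)))"
    by (subst sum.swap) (simp add: sum_distrib_left)
  also have "\<dots> = (\<Sum>T\<in>Pow {..<d}. fh d F T * ((2^d * fh d F T) ^ card S * (2^d) ^ (k - card S)))"
  proof (intro sum.cong refl)
    fix T
    have "(\<Sum>x\<in>cube d. F x * chi T x) = 2^d * fh d F T" by (simp add: fh_def)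
    then show "fh d F T * (\<Sum>xs\<in>LL d k. \<Prod>i\<in>S. F (xs!i) * chi T (xs!i)) =
      fh d F T * ((2^d * fh d F T) ^ card S * (2^d) ^ (k - card S))"
      using sum_prod_S[OF assms, where d=d and g="\<lambda>x. F x * chi T x"] by simp
  qed
  also have "\<dots> = (\<Sum>T\<in>Pow {..<d}. (2^d)^k * fh d F T ^ (card S + 1))"
  proof (intro sum.cong refl)
    fix T
    have cS: "card S \<le> k" using assms card_mono[of "{..<k}" S] by simp
    have "((2::real)^d) ^ card S * (2^d) ^ (k - card S) = (2^d)^k"
      using cS by (metis power_add le_add_diff_inverse)
    then show "fh d F T * ((2^d * fh d F T) ^ card S * (2^d) ^ (k - card S)) = (2^d)^k * fh d F T ^ (card S + 1)"
      by (simp add: power_mult_distrib mult_ac)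
  qed
  also have "\<dots> = (2^d)^k * (\<Sum>T\<in>Pow {..<d}. fh d F T ^ (card S + 1))"
    by (simp add: sum_distrib_left)
  finally show ?thesis .
qed

lemma fh_bound_sum:
  assumes pars: "(\<Sum>T\<in>Pow {..<d}. fh d F T * fh d F T) = 1"
    and ub: "\<And>T. T \<subseteq> {..<d} \<Longrightarrow> fh d F T \<le> 1 - 2*\<epsilon>"
    and r: "even r" "r \<ge> 2"
  shows "(\<Sum>T\<in>Pow {..<d}. fh d F T ^ (r + 1)) \<le> max 0 (1 - 2*\<epsilon>)"
proof -
  have le1: "fh d F T * fh d F T \<le> 1" if "T \<in> Pow {..<d}" for T
  proof -
    have "fh d F T * fh d F T \<le> (\<Sum>T\<in>Pow {..<d}. fh d F T * fh d F T)"
      by (rule member_le_sum) (use that in auto)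
    then show ?thesis using pars by simp
  qed
  have trm: "fh d F T ^ (r + 1) \<le> max 0 (1 - 2*\<epsilon>) * (fh d F T * fh d F T)" if T: "T \<in> Pow {..<d}" for T
  proof (cases "fh d F T \<ge> 0")
    case True
    let ?a = "fh d F T"
    have "?a \<le> 1"
    proof (rule ccontr)
      assume "\<not> ?a \<le> 1" then have "?a * ?a > 1 * 1" by (intro mult_strict_mono) auto
      then show False using le1[OF T] by simp
    qed
    have rr: "r + 1 = (r - 1) + 2" using r by simp
    have e: "?a ^ (r+1) = ?a ^ (r - 1) * (?a * ?a)"
      by (simp only: rr power_add power2_eq_square)
    have "?a ^ (r - 1) \<le> ?a ^ 1" using True \<open>?a \<le> 1\<close> r by (intro power_decreasing) auto
    then have "?a ^ (r - 1) \<le> max 0 (1 - 2*\<epsilon>)" using ub[of T] T by auto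
    then show ?thesis unfolding e by (intro mult_right_mono) auto
  next
    case False
    obtain m where m: "r = 2*m" using r by blast
    have "fh d F T * fh d F T > 0" using False by (simp add: mult_neg_neg)
    then have "fh d F T ^ r > 0" unfolding m by (simp add: power_mult power2_eq_square)
    then have "fh d F T ^ (r+1) < 0" using False by (simp add: mult_neg_pos)
    moreover have "0 \<le> max 0 (1 - 2*\<epsilon>) * (fh d F T * fh d F T)" by simp
    ultimately show ?thesis by linarith
  qed
  have "(\<Sum>T\<in>Pow {..<d}. fh d F T ^ (r + 1)) \<le> (\<Sum>T\<in>Pow {..<d}. max 0 (1 - 2*\<epsilon>) * (fh d F T * fh d F T))"
    by (rule sum_mono) (rule trm)
  also have "\<dots> = max 0 (1 - 2*\<epsilon>)" by (simp add: sum_distrib_left[symmetric] pars)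
  finally show ?thesis .
qed

lemma sum_pm1_count:
  assumes "finite A" "\<And>x. x \<in> A \<Longrightarrow> P x = 1 \<or> P x = -1"
  shows "(\<Sum>x\<in>A. P x) = real (card A) - 2 * real (card {x\<in>A. P x = (-1::real)})"
proof -
  have "(\<Sum>x\<in>A. P x) = (\<Sum>x\<in>A. 1 - 2 * (if P x = -1 then 1 else 0))"
    by (intro sum.cong refl) (use assms(2) in force)
  also have "\<dots> = real (card A) - 2 * (\<Sum>x\<in>A. if P x = -1 then 1 else 0)"
    by (simp add: sum_subtractf sum_distrib_left)
  also have "(\<Sum>x\<in>A. if P x = -1 then 1 else (0::real)) = (\<Sum>x\<in>{x\<in>A. P x = -1}. 1)"
    using assms(1) by (subst sum.inter_filter[symmetric]) simp_all
  finally show ?thesis by simp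
qed

definition gT :: "nat set \<Rightarrow> bool list \<Rightarrow> bool" where "gT T x = odd (card {i\<in>T. x!i})"

lemma chi_gT: "finite T \<Longrightarrow> chi T x = sg (gT T x)"
  by (simp add: chi_def gT_def sg_parity)

lemma linear_gT: "T \<subseteq> {..<d} \<Longrightarrow> linear_fn d (gT T)"
  unfolding linear_fn_def gT_def by blast

lemma sg_mult: "sg a * sg b = (if a = b then 1 else -1)" by (simp add: sg_def)

lemma fh_far:
  assumes far: "eps_far d \<epsilon> f" and T: "T \<subseteq> {..<d}"
  shows "fh d (\<lambda>x. sg (f x)) T \<le> 1 - 2*\<epsilon>"
proof -
  have finT: "finite T" using T finite_subset by blast
  have dis: "real (card {x\<in>cube d. f x \<noteq> gT T x}) \<ge> \<epsilon> * 2^d"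
    using far linear_gT[OF T] unfolding eps_far_def by (simp add: card_cube)
  have "(\<Sum>x\<in>cube d. sg (f x) * chi T x) = (\<Sum>x\<in>cube d. sg (f x) * sg (gT T x))"
    by (simp add: chi_gT finT)
  also have "\<dots> = real (card (cube d)) - 2 * real (card {x\<in>cube d. sg (f x) * sg (gT T x) = -1})"
    by (rule sum_pm1_count) (auto simp: sg_mult)
  also have "{x\<in>cube d. sg (f x) * sg (gT T x) = -1} = {x\<in>cube d. f x \<noteq> gT T x}"
    by (auto simp: sg_mult)
  finally have "(\<Sum>x\<in>cube d. sg (f x) * chi T x) \<le> 2^d - 2 * (\<epsilon> * 2^d)"
    using dis by (simp add: card_cube)
  then show ?thesis by (simp add: fh_def field_simps)
qed

lemma sg_f_sq: "sg (f x) * sg (f x) = 1" by simp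

lemma violation_count:
  assumes far: "eps_far d \<epsilon> f" and eps: "0 < \<epsilon>" "\<epsilon> < 1"
    and S: "S \<subseteq> {..<k}" "even (card S)" "S \<noteq> {}"
  shows "real (card {xs\<in>LL d k. (\<Prod>i\<in>S. sg (f (xs!i))) * sg (f (vS d S xs)) = -1})
          \<ge> real (card (LL d k)) * \<epsilon> / 2"
proof -
  let ?F = "\<lambda>x. sg (f x)"
  have finS: "finite S" using S finite_subset by blast
  have c2: "card S \<ge> 2"
  proof -
    have "card S \<noteq> 0" using S finS by simp
    then show ?thesis using S(2) by presburger
  qed
  have pars: "(\<Sum>T\<in>Pow {..<d}. fh d ?F T * fh d ?F T) = 1" by (rule parseval) simp
  have b: "(\<Sum>T\<in>Pow {..<d}. fh d ?F T ^ (card S + 1)) \<le> max 0 (1 - 2*\<epsilon>)"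
    by (rule fh_bound_sum[OF pars fh_far[OF far]]) (use S c2 in auto)
  have pm: "(\<Prod>i\<in>S. sg (f (xs!i))) * sg (f (vS d S xs)) = 1 \<or>
            (\<Prod>i\<in>S. sg (f (xs!i))) * sg (f (vS d S xs)) = -1" for xs
  proof -
    have "(\<Prod>i\<in>S. sg (f (xs!i))) = sg (odd (card {i\<in>S. f (xs!i)}))" using finS by (simp add: sg_parity)
    then show ?thesis by (simp add: sg_def)
  qed
  have "(\<Sum>xs\<in>LL d k. (\<Prod>i\<in>S. ?F (xs!i)) * ?F (vS d S xs))
     = real (card (LL d k)) - 2 * real (card {xs\<in>LL d k. (\<Prod>i\<in>S. sg (f (xs!i))) * sg (f (vS d S xs)) = -1})"
    by (rule sum_pm1_count) (use pm in auto)
  moreover have "(\<Sum>xs\<in>LL d k. (\<Prod>i\<in>S. ?F (xs!i)) * ?F (vS d S xs)) \<le> real (card (LL d k)) * max 0 (1 - 2*\<epsilon>)"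
    using main_identity[OF S(1), where d=d and F="?F"] b by (simp add: card_LL mult_left_mono)
  moreover have "real (card (LL d k)) * max 0 (1 - 2*\<epsilon>) \<le> real (card (LL d k)) * (1 - \<epsilon>)"
    using eps by (intro mult_left_mono) auto
  ultimately show ?thesis by (simp add: algebra_simps)
qed

lemma linear_sg:
  assumes "linear_fn d f"
  obtains U where "U \<subseteq> {..<d}" "\<And>x. x \<in> cube d \<Longrightarrow> sg (f x) = chi U x"
proof -
  obtain U where U: "U \<subseteq> {..<d}" "\<And>x. x\<in>cube d \<Longrightarrow> f x = odd (card {i\<in>U. x ! i})"
    using assms unfolding linear_fn_def by blast
  have "finite U" using U finite_subset by blast
  then show ?thesis using U that by (simp add: chi_gT gT_def)
qed

lemma chi_sq: "chi U x * chi U x = 1"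
  by (simp add: chi_def prod.distrib[symmetric])

lemma linear_pass:
  assumes "linear_fn d f" "S \<subseteq> {..<k}" "xs \<in> LL d k"
  shows "(\<Prod>i\<in>S. sg (f (xs!i))) * sg (f (vS d S xs)) = 1"
proof -
  obtain U where U: "U \<subseteq> {..<d}" "\<And>x. x \<in> cube d \<Longrightarrow> sg (f x) = chi U x"
    using linear_sg[OF assms(1)] by blast
  have finS: "finite S" using assms(2) finite_subset by blast
  have "(\<Prod>i\<in>S. sg (f (xs!i))) = (\<Prod>i\<in>S. chi U (xs!i))"
    using assms(2,3) by (intro prod.cong refl) (auto simp: U(2) LL_nth_cube)
  also have "\<dots> = chi U (vS d S xs)" using chi_vS[OF U(1) finS] by simp
  finally show ?thesis using U(2)[OF vS_cube] by (simp add: chi_sq)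
qed

fun run :: "(bool list \<Rightarrow> bool) \<Rightarrow> (history \<Rightarrow> bool list set) \<Rightarrow> bool list list
            \<Rightarrow> history \<times> bool list set \<Rightarrow> history \<times> bool list set" where
  "run f adv [] st = st"
| "run f adv (q # qs) (h, E) =
     run f adv qs (h @ [(q, if q \<in> E then None else Some (f q))],
                   E \<union> adv (h @ [(q, if q \<in> E then None else Some (f q))]))"

lemma oracle_run_eq: "oracle_run f adv qs h E = fst (run f adv qs (h, E))"
  by (induction qs arbitrary: h E) (simp_all add: Let_def)

lemma run_append: "run f adv (xs @ ys) st = run f adv ys (run f adv xs st)"
proof (induction xs arbitrary: st)
  case Nil then show ?case by simp
next
  case (Cons x xs) then show ?case by (cases st) simp
qed

lemma run_hist: "\<exists>nh. fst (run f adv qs (h, E)) = h @ nh \<and> length nh = length qs"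
proof (induction qs arbitrary: h E)
  case Nil then show ?case by simp
next
  case (Cons q qs)
  let ?h' = "h @ [(q, if q \<in> E then None else Some (f q))]"
  obtain nh where "fst (run f adv qs (?h', E \<union> adv ?h')) = ?h' @ nh" "length nh = length qs"
    using Cons by blast
  then show ?case by (intro exI[of _ "(q, if q \<in> E then None else Some (f q)) # nh"]) simp
qed

definition newans :: "(bool list \<Rightarrow> bool) \<Rightarrow> (history \<Rightarrow> bool list set) \<Rightarrow> bool list list
   \<Rightarrow> history \<times> bool list set \<Rightarrow> bool option list" where
  "newans f adv qs st = map snd (drop (length (fst st)) (fst (run f adv qs st)))"

lemma length_newans[simp]: "length (newans f adv qs st) = length qs"
proof -
  obtain h E where st: "st = (h, E)" by (cases st)
  obtain nh where "fst (run f adv qs (h, E)) = h @ nh" "length nh = length qs" using run_hist by blast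
  then show ?thesis by (simp add: newans_def st)
qed

lemma newans_append: "newans f adv (xs @ ys) st = newans f adv xs st @ newans f adv ys (run f adv xs st)"
proof -
  obtain h E where st: "st = (h, E)" by (cases st)
  obtain nh where nh: "fst (run f adv xs (h, E)) = h @ nh" "length nh = length xs" using run_hist by blast
  obtain h2 E2 where st2: "run f adv xs (h, E) = (h2, E2)" by (cases "run f adv xs (h, E)")
  obtain nh2 where nh2: "fst (run f adv ys (h2, E2)) = h2 @ nh2" using run_hist by blast
  have "h2 = h @ nh" using nh st2 by simp
  then show ?thesis using nh nh2 st2 by (simp add: newans_def st run_append)
qed

lemma newans_single: "newans f adv [q] (h, E) = [if q \<in> E then None else Some (f q)]"
  by (simp add: newans_def)

lemma newans_nth:
  assumes "j < length qs"
  shows "newans f adv qs st ! j = (if qs!j \<in> snd (run f adv (take j qs) st) then None else Some (f (qs!j)))"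
proof -
  have qs: "qs = take j qs @ [qs!j] @ drop (Suc j) qs" using assms by (simp add: id_take_nth_drop)
  obtain h2 E2 where st2: "run f adv (take j qs) st = (h2, E2)" by (cases "run f adv (take j qs) st")
  have "newans f adv qs st = newans f adv (take j qs) st @ newans f adv ([qs!j] @ drop (Suc j) qs) (h2, E2)"
    by (subst qs) (simp only: newans_append st2)
  also have "\<dots> = newans f adv (take j qs) st @ [if qs!j \<in> E2 then None else Some (f (qs!j))] @ newans f adv (drop (Suc j) qs) (run f adv [qs!j] (h2,E2))"
    by (simp only: newans_append newans_single)
  finally show ?thesis using assms st2 by (simp add: nth_append)
qed

lemma answers_eq: "answers f adv qs = newans f adv qs ([], {})"
  by (simp add: answers_def newans_def oracle_run_eq)

lemma run_erased_card:
  assumes adv: "erasure_adversary d t adv" and fin: "finite E"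
  shows "finite (snd (run f adv qs (h, E))) \<and> card (snd (run f adv qs (h, E))) \<le> card E + t * length qs"
  using fin
proof (induction qs arbitrary: h E)
  case Nil then show ?case by simp
next
  case (Cons q qs)
  let ?h' = "h @ [(q, if q \<in> E then None else Some (f q))]"
  have a: "finite (adv ?h')" "card (adv ?h') \<le> t" using adv by (auto simp: erasure_adversary_def)
  have f2: "finite (E \<union> adv ?h')" using Cons.prems a by simp
  have c2: "card (E \<union> adv ?h') \<le> card E + t" using card_Un_le[of E "adv ?h'"] a by simp
  have r: "run f adv (q # qs) (h, E) = run f adv qs (?h', E \<union> adv ?h')" by simp
  have IH: "finite (snd (run f adv qs (?h', E \<union> adv ?h')))"
     "card (snd (run f adv qs (?h', E \<union> adv ?h'))) \<le> card (E \<union> adv ?h') + t * length qs"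
    using Cons.IH[OF f2, of ?h'] by auto
  have "card (E \<union> adv ?h') + t * length qs \<le> card E + t * length (q # qs)" using c2 by simp
  then show ?case unfolding r using IH by linarith
qed

definition Ev :: "nat \<Rightarrow> nat set set" where "Ev k = {S. S \<subseteq> {..<k} \<and> even (card S)}"
definition rq :: "nat \<Rightarrow> nat set \<Rightarrow> bool list list \<Rightarrow> bool list list" where
  "rq d S xs = xs @ [vS d S xs]"
definition ok :: "nat set \<Rightarrow> bool option list \<Rightarrow> bool" where
  "ok S ans \<longleftrightarrow> None \<in> set ans \<or> (\<Prod>i\<in>S. sg (the (ans!i))) * sg (the (last ans)) = 1"
definition ind :: "bool \<Rightarrow> real" where "ind P = (if P then 1 else 0)"

lemma ind_ge0[simp]: "0 \<le> ind P" by (simp add: ind_def)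
lemma ind_le1[simp]: "ind P \<le> 1" by (simp add: ind_def)

lemma finite_Ev[simp]: "finite (Ev k)"
  by (rule finite_subset[of _ "Pow {..<k}"]) (auto simp: Ev_def)

lemma Ev_sub: "S \<in> Ev k \<Longrightarrow> S \<subseteq> {..<k}" by (simp add: Ev_def)

lemma card_Ev_le: "card (Ev k) \<le> 2^k"
proof -
  have "card (Ev k) \<le> card (Pow {..<k})" by (rule card_mono) (auto simp: Ev_def)
  then show ?thesis by (simp add: card_Pow)
qed

lemma card_Ev_ge: assumes "k \<ge> 1" shows "2^(k-1) \<le> card (Ev k)"
proof -
  define Od where "Od = {S. S \<subseteq> {..<k} \<and> odd (card S)}"
  have z: "0 \<in> {..<k}" using assms by simp
  have disj: "Ev k \<inter> Od = {}" by (auto simp: Ev_def Od_def)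
  have un: "Ev k \<union> Od = Pow {..<k}" by (auto simp: Ev_def Od_def)
  have finO: "finite Od" by (rule finite_subset[of _ "Pow {..<k}"]) (auto simp: Od_def)
  have sum: "card (Ev k) + card Od = 2^k"
    using card_Un_disjoint[OF finite_Ev finO disj] un by (simp add: card_Pow)
  let ?g = "\<lambda>S. if 0 \<in> S then S - {0} else insert 0 S"
  have gg: "?g (?g S) = S" for S
    by (cases "0 \<in> S") (simp_all add: insert_absorb)
  have inj: "inj_on ?g Od" by (rule inj_on_inverseI[where g="?g"]) (rule gg)
  have img: "?g ` Od \<subseteq> Ev k"
  proof
    fix T assume "T \<in> ?g ` Od"
    then obtain S where S: "S \<in> Od" "T = ?g S" by blast
    have finS: "finite S" using S(1) finite_subset[of S "{..<k}"] by (auto simp: Od_def)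
    show "T \<in> Ev k"
    proof (cases "0 \<in> S")
      case True
      then have "card (S - {0}) = card S - 1" using finS by simp
      moreover have "card S \<ge> 1" using True finS by (metis card_0_eq empty_iff less_one not_le)
      ultimately show ?thesis using S True by (auto simp: Ev_def Od_def)
    next
      case False
      then have "card (insert 0 S) = Suc (card S)" using finS by simp
      then show ?thesis using S False z by (auto simp: Ev_def Od_def)
    qed
  qed
  have "card Od \<le> card (Ev k)" using card_inj_on_le[OF inj img] by simp
  then have "2^k \<le> 2 * card (Ev k)" using sum by simp
  moreover have "(2::nat)^k = 2 * 2^(k-1)" using assms by (metis Suc_diff_le diff_Suc_1 power_Suc)
  ultimately show ?thesis by simp
qed

lemma rq_nth_lt: "xs \<in> LL d k \<Longrightarrow> j < k \<Longrightarrow> rq d S xs ! j = xs ! j"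
  by (simp add: rq_def LL_def nth_append)
lemma rq_nth_k: "xs \<in> LL d k \<Longrightarrow> rq d S xs ! k = vS d S xs"
  by (simp add: rq_def LL_def nth_append)
lemma rq_take: "xs \<in> LL d k \<Longrightarrow> j \<le> k \<Longrightarrow> take j (rq d S xs) = take j xs"
  by (simp add: rq_def LL_def)
lemma length_rq: "xs \<in> LL d k \<Longrightarrow> length (rq d S xs) = Suc k"
  by (simp add: rq_def LL_def)

lemma prod_pm1: "finite S \<Longrightarrow> (\<Prod>i\<in>S. sg (P i)) * sg b = 1 \<or> (\<Prod>i\<in>S. sg (P i)) * sg b = -1"
proof -
  assume "finite S"
  then have "(\<Prod>i\<in>S. sg (P i)) = sg (odd (card {i\<in>S. P i}))" by (simp add: sg_parity)
  then show ?thesis by (simp add: sg_def)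
qed

lemma pointwise:
  assumes xs: "xs \<in> LL d k" and S: "S \<in> Ev k"
  shows "ind ((\<Prod>i\<in>S. sg (f (xs!i))) * sg (f (vS d S xs)) = -1)
         - (\<Sum>j<k. ind (xs!j \<in> snd (run f adv (take j xs) st)))
         - ind (vS d S xs \<in> snd (run f adv xs st))
         \<le> ind (\<not> ok S (newans f adv (rq d S xs) st))"
proof (cases "(\<exists>j<k. xs!j \<in> snd (run f adv (take j xs) st)) \<or> vS d S xs \<in> snd (run f adv xs st)")
  case True
  then have "1 \<le> (\<Sum>j<k. ind (xs!j \<in> snd (run f adv (take j xs) st))) + ind (vS d S xs \<in> snd (run f adv xs st))"
  proof
    assume "\<exists>j<k. xs!j \<in> snd (run f adv (take j xs) st)"
    then obtain j where j: "j < k" "xs!j \<in> snd (run f adv (take j xs) st)" by blast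
    have "1 = ind (xs!j \<in> snd (run f adv (take j xs) st))" using j by (simp add: ind_def)
    also have "\<dots> \<le> (\<Sum>j<k. ind (xs!j \<in> snd (run f adv (take j xs) st)))"
      by (rule member_le_sum) (use j in auto)
    finally show ?thesis by (simp add: add_increasing2)
  next
    assume "vS d S xs \<in> snd (run f adv xs st)"
    then show ?thesis by (simp add: ind_def sum_nonneg)
  qed
  moreover have "ind ((\<Prod>i\<in>S. sg (f (xs!i))) * sg (f (vS d S xs)) = -1) \<le> 1" by simp
  moreover have "0 \<le> ind (\<not> ok S (newans f adv (rq d S xs) st))" by simp
  ultimately show ?thesis by linarith
next
  case False
  have lxs: "length xs = k" using xs by (simp add: LL_def)
  have ans: "newans f adv (rq d S xs) st = map (\<lambda>q. Some (f q)) (rq d S xs)"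
  proof (rule nth_equalityI)
    show "length (newans f adv (rq d S xs) st) = length (map (\<lambda>q. Some (f q)) (rq d S xs))" by simp
    fix j assume "j < length (newans f adv (rq d S xs) st)"
    then have j: "j < Suc k" using length_rq[OF xs] by simp
    have "rq d S xs ! j \<notin> snd (run f adv (take j (rq d S xs)) st)"
    proof (cases "j < k")
      case True then show ?thesis using False by (simp add: rq_nth_lt[OF xs] rq_take[OF xs])
    next
      case False': False
      then have "j = k" using j by simp
      then show ?thesis using False lxs by (simp add: rq_nth_k[OF xs] rq_take[OF xs])
    qed
    then show "newans f adv (rq d S xs) st ! j = map (\<lambda>q. Some (f q)) (rq d S xs) ! j"
      using j length_rq[OF xs] by (simp add: newans_nth)
  qed
  have Sk: "S \<subseteq> {..<k}" using S by (simp add: Ev_def)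
  have finS: "finite S" using Sk finite_subset by blast
  have "(\<Prod>i\<in>S. sg (the (newans f adv (rq d S xs) st ! i))) = (\<Prod>i\<in>S. sg (f (xs!i)))"
    using Sk length_rq[OF xs] by (intro prod.cong refl) (auto simp: ans rq_nth_lt[OF xs])
  moreover have "last (newans f adv (rq d S xs) st) = Some (f (vS d S xs))"
    by (simp only: ans) (simp add: rq_def)
  moreover have "None \<notin> set (newans f adv (rq d S xs) st)" by (auto simp: ans)
  ultimately have "\<not> ok S (newans f adv (rq d S xs) st) \<longleftrightarrow> (\<Prod>i\<in>S. sg (f (xs!i))) * sg (f (vS d S xs)) = -1"
    using prod_pm1[OF finS, of "\<lambda>i. f (xs!i)" "f (vS d S xs)"] by (auto simp: ok_def)
  moreover have "(\<Sum>j<k. ind (xs!j \<in> snd (run f adv (take j xs) st))) = 0"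
    using False by (intro sum.neutral) (simp add: ind_def)
  moreover have "ind (vS d S xs \<in> snd (run f adv xs st)) = 0" using False by (simp add: ind_def)
  ultimately show ?thesis by simp
qed

lemma cube_Suc: "cube (Suc d) = (\<lambda>(b,x). b#x) ` (UNIV \<times> cube d)"
proof (rule set_eqI)
  fix ys show "ys \<in> cube (Suc d) \<longleftrightarrow> ys \<in> (\<lambda>(b,x). b#x) ` (UNIV \<times> cube d)"
    by (cases ys) (auto simp: cube_def)
qed

lemma sum_cube_Suc: "(\<Sum>ys\<in>cube (Suc d). g ys) = (\<Sum>b\<in>UNIV. \<Sum>x\<in>cube d. g (b#x))"
proof -
  have inj: "inj_on (\<lambda>(b,x). b#x) (UNIV \<times> cube d)" by (auto simp: inj_on_def)
  have "(\<Sum>ys\<in>cube (Suc d). g ys) = (\<Sum>p\<in>UNIV \<times> cube d. g (fst p # snd p))"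
    unfolding cube_Suc by (subst sum.reindex[OF inj]) (auto intro!: sum.cong)
  also have "\<dots> = (\<Sum>(b,x)\<in>UNIV \<times> cube d. g (b#x))" by (simp add: case_prod_beta)
  also have "\<dots> = (\<Sum>b\<in>UNIV. \<Sum>x\<in>cube d. g (b#x))" by (rule sum.cartesian_product[symmetric])
  finally show ?thesis .
qed

lemma sum_prod_cube:
  "(\<Sum>x\<in>cube d. \<Prod>i<d. h i (x!i)) = (\<Prod>i<d. \<Sum>b\<in>UNIV. (h i b :: real))"
proof (induction d arbitrary: h)
  case 0
  have "cube 0 = {[]}" by (auto simp: cube_def)
  then show ?case by simp
next
  case (Suc d)
  have "(\<Sum>x\<in>cube (Suc d). \<Prod>i<Suc d. h i (x!i))
      = (\<Sum>b\<in>UNIV. \<Sum>x\<in>cube d. h 0 b * (\<Prod>i<d. h (Suc i) (x!i)))"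
    by (simp only: sum_cube_Suc prod.lessThan_Suc_shift nth_Cons_0 nth_Cons_Suc)
  also have "\<dots> = (\<Sum>b\<in>UNIV. h 0 b * (\<Prod>i<d. \<Sum>c\<in>UNIV. h (Suc i) c))"
    by (simp add: sum_distrib_left[symmetric] Suc.IH[of "\<lambda>i. h (Suc i)"])
  also have "\<dots> = (\<Prod>i<Suc d. \<Sum>b\<in>UNIV. h i b)"
    by (simp only: prod.lessThan_Suc_shift sum_distrib_right)
  finally show ?case .
qed

lemma chi_sum_zero:
  assumes "T \<subseteq> {..<d}" "T \<noteq> {}"
  shows "(\<Sum>x\<in>cube d. chi T x) = 0"
proof -
  have "(\<Sum>x\<in>cube d. chi T x) = (\<Sum>x\<in>cube d. \<Prod>i<d. (\<lambda>i b. if i \<in> T then sg b else 1) i (x!i))"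
  proof (intro sum.cong refl)
    fix x
    have "(\<Prod>i<d. if i \<in> T then sg (x!i) else 1) = (\<Prod>i\<in>{..<d} \<inter> T. sg (x!i))"
      by (rule prod.inter_restrict[symmetric]) simp
    also have "{..<d} \<inter> T = T" using assms by auto
    finally show "chi T x = (\<Prod>i<d. (\<lambda>i b. if i \<in> T then sg b else 1) i (x!i))" by (simp add: chi_def)
  qed
  also have "\<dots> = (\<Prod>i<d. \<Sum>b\<in>UNIV. (\<lambda>i b. if i \<in> T then sg b else 1) i b)" by (rule sum_prod_cube)
  also have "\<dots> = 0"
  proof -
    obtain i where i: "i \<in> T" using assms by blast
    have "(\<Sum>b\<in>UNIV. (\<lambda>i b. if i \<in> T then sg b else 1) i b) = 0" using i by (simp add: UNIV_bool sg_def)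
    then show ?thesis using i assms by (intro prod_zero) (auto intro!: bexI[of _ i])
  qed
  finally show ?thesis .
qed

lemma prod_S_restrict: "S \<subseteq> {..<(k::nat)} \<Longrightarrow> (\<Prod>i\<in>S. g i) = (\<Prod>i<k. if i \<in> S then g i else 1)"
proof -
  assume S: "S \<subseteq> {..<k}"
  have "(\<Prod>i<k. if i \<in> S then g i else 1) = (\<Prod>i\<in>{..<k} \<inter> S. g i)"
    by (simp add: prod.inter_restrict[OF finite_lessThan])
  also have "{..<k} \<inter> S = S" using S by auto
  finally show ?thesis by simp
qed

lemma collision:
  assumes S: "S \<subseteq> {..<k}" "S' \<subseteq> {..<k}" "S \<noteq> S'"
  shows "(\<Sum>xs\<in>LL d k. ind (vS d S xs = vS d S' xs)) = (2^d)^k / 2^d"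
proof -
  have finS: "finite S" "finite S'" using S finite_subset by blast+
  obtain i0 where i0: "i0 < k" "(i0 \<in> S \<and> i0 \<notin> S') \<or> (i0 \<notin> S \<and> i0 \<in> S')"
    using S by blast
  have "(\<Sum>xs\<in>LL d k. ind (vS d S xs = vS d S' xs))
      = (\<Sum>xs\<in>LL d k. (\<Sum>T\<in>Pow {..<d}. chi T (vS d S xs) * chi T (vS d S' xs)) / 2^d)"
    by (intro sum.cong refl) (simp add: orth ind_def)
  also have "\<dots> = (\<Sum>T\<in>Pow {..<d}. (\<Sum>xs\<in>LL d k. \<Prod>i<k. (\<lambda>i x. (if i \<in> S then chi T x else 1) * (if i \<in> S' then chi T x else 1)) i (xs!i))) / 2^d"
  proof -
    have "chi T (vS d S xs) * chi T (vS d S' xs) = (\<Prod>i<k. (\<lambda>i x. (if i \<in> S then chi T x else 1) * (if i \<in> S' then chi T x else 1)) i (xs!i))"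
      if "T \<in> Pow {..<d}" for T xs
    proof -
      have "chi T (vS d S xs) * chi T (vS d S' xs) = (\<Prod>i\<in>S. chi T (xs!i)) * (\<Prod>i\<in>S'. chi T (xs!i))"
        using that finS by (simp add: chi_vS)
      also have "\<dots> = (\<Prod>i<k. if i \<in> S then chi T (xs!i) else 1) * (\<Prod>i<k. if i \<in> S' then chi T (xs!i) else 1)"
        using S by (simp add: prod_S_restrict[of S k] prod_S_restrict[of S' k])
      also have "\<dots> = (\<Prod>i<k. (\<lambda>i x. (if i \<in> S then chi T x else 1) * (if i \<in> S' then chi T x else 1)) i (xs!i))"
        by (simp add: prod.distrib)
      finally show ?thesis .
    qed
    then show ?thesis
      by (simp add: sum_divide_distrib[symmetric] sum.swap[of _ "Pow {..<d}"])
  qed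
  also have "\<dots> = (\<Sum>T\<in>Pow {..<d}. (\<Prod>i<k. \<Sum>x\<in>cube d. (\<lambda>i x. (if i \<in> S then chi T x else 1) * (if i \<in> S' then chi T x else 1)) i x)) / 2^d"
  proof -
    have "(\<Sum>xs\<in>LL d k. \<Prod>i<k. (\<lambda>i x. (if i \<in> S then chi T x else 1) * (if i \<in> S' then chi T x else 1)) i (xs!i))
      = (\<Prod>i<k. \<Sum>x\<in>cube d. (\<lambda>i x. (if i \<in> S then chi T x else 1) * (if i \<in> S' then chi T x else 1)) i x)" for T
      by (rule sum_prod_LL)
    then show ?thesis by presburger
  qed
  also have "\<dots> = (\<Sum>T\<in>Pow {..<d}. if T = {} then (2^d)^k else 0) / 2^d"
  proof -
    have "(\<Prod>i<k. \<Sum>x\<in>cube d. (\<lambda>i x. (if i \<in> S then chi T x else 1) * (if i \<in> S' then chi T x else 1)) i x)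
          = (if T = {} then (2^d)^k else 0)" if T: "T \<in> Pow {..<d}" for T
    proof (cases "T = {}")
      case True
      have "(\<Sum>x\<in>cube d. (\<lambda>i x. (if i \<in> S then chi T x else 1) * (if i \<in> S' then chi T x else 1)) i x) = 2^d" for i
        using True by (simp only: chi_def prod.empty if_cancel mult_1) (simp add: card_cube)
      then show ?thesis using True by simp
    next
      case False
      have "(\<Sum>x\<in>cube d. (\<lambda>i x. (if i \<in> S then chi T x else 1) * (if i \<in> S' then chi T x else 1)) i0 x) = 0"
        using i0 chi_sum_zero[of T d] T False by auto
      then have "(\<Prod>i<k. \<Sum>x\<in>cube d. (\<lambda>i x. (if i \<in> S then chi T x else 1) * (if i \<in> S' then chi T x else 1)) i x) = 0"
        using i0 by (intro prod_zero) (simp, rule bexI[of _ i0], auto)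
      then show ?thesis using False by simp
    qed
    then show ?thesis by (intro arg_cong[where f="\<lambda>x. x / 2^d"] sum.cong refl) auto
  qed
  also have "\<dots> = (2^d)^k / 2^d" by (simp add: sum.delta')
  finally show ?thesis .
qed

lemma sum_ind_cube: "finite A \<Longrightarrow> (\<Sum>x\<in>cube d. ind (x \<in> A)) \<le> real (card A)"
proof -
  assume "finite A"
  have "(\<Sum>x\<in>cube d. ind (x \<in> A)) = real (card {x\<in>cube d. x \<in> A})"
    by (simp add: ind_def sum.inter_filter[symmetric])
  also have "\<dots> \<le> real (card A)" using \<open>finite A\<close> by (intro of_nat_mono card_mono) auto
  finally show ?thesis .
qed

lemma count_prefix:
  assumes "j < k" "\<And>zs. length zs = j \<Longrightarrow> finite (G zs) \<and> card (G zs) \<le> B"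
  shows "(\<Sum>xs\<in>LL d k. ind (xs!j \<in> G (take j xs))) \<le> real B * (2^d)^k / 2^d"
  using assms
proof (induction j arbitrary: k G)
  case 0
  then obtain k' where k: "k = Suc k'" by (cases k) auto
  have GB: "finite (G [])" "card (G []) \<le> B" using 0(2)[of "[]"] by auto
  have "(\<Sum>xs\<in>LL d k. ind (xs!0 \<in> G (take 0 xs))) = (\<Sum>x\<in>cube d. \<Sum>xs\<in>LL d k'. ind (x \<in> G []))"
    by (simp add: k sum_LL_Suc)
  also have "\<dots> = (\<Sum>x\<in>cube d. ind (x \<in> G []) * (2^d)^k')" by (simp add: card_LL mult.commute)
  also have "\<dots> = (\<Sum>x\<in>cube d. ind (x \<in> G [])) * (2^d)^k'" by (rule sum_distrib_right[symmetric])
  also have "\<dots> \<le> real B * (2^d)^k'"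
    using sum_ind_cube[OF GB(1), of d] GB(2) by (intro mult_right_mono) auto
  also have "\<dots> = real B * (2^d)^k / 2^d" by (simp add: k)
  finally show ?case .
next
  case (Suc j)
  then obtain k' where k: "k = Suc k'" "j < k'" by (cases k) auto
  have "(\<Sum>xs\<in>LL d k. ind (xs!Suc j \<in> G (take (Suc j) xs)))
      = (\<Sum>x\<in>cube d. \<Sum>xs\<in>LL d k'. ind (xs!j \<in> (\<lambda>zs. G (x#zs)) (take j xs)))"
    by (simp add: k sum_LL_Suc)
  also have "\<dots> \<le> (\<Sum>x\<in>cube d. real B * (2^d)^k' / 2^d)"
  proof (rule sum_mono)
    fix x
    show "(\<Sum>xs\<in>LL d k'. ind (xs!j \<in> (\<lambda>zs. G (x#zs)) (take j xs))) \<le> real B * (2^d)^k' / 2^d"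
      by (rule Suc.IH[OF k(2)]) (use Suc.prems(2) in simp)
  qed
  also have "\<dots> = real B * (2^d)^k / 2^d" by (simp add: card_cube k)
  finally show ?case .
qed

lemma count_last:
  assumes H: "\<And>xs. xs \<in> LL d k \<Longrightarrow> finite (H xs) \<and> card (H xs) \<le> B"
  shows "(\<Sum>xs\<in>LL d k. \<Sum>S\<in>Ev k. ind (vS d S xs \<in> H xs))
         \<le> real B * (2^d)^k + real B * real (card (Ev k))^2 * (2^d)^k / 2^d"
proof -
  let ?X = "\<lambda>xs. (\<Sum>S\<in>Ev k. \<Sum>S'\<in>Ev k - {S}. ind (vS d S' xs = vS d S xs))"
  have per: "(\<Sum>S\<in>Ev k. ind (vS d S xs \<in> H xs)) \<le> real B + real B * ?X xs" if xs: "xs \<in> LL d k" for xs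
  proof -
    define A where "A = {S\<in>Ev k. vS d S xs \<in> H xs}"
    define NU where "NU = {S\<in>Ev k. \<exists>S'\<in>Ev k. S' \<noteq> S \<and> vS d S' xs = vS d S xs}"
    have finA: "finite A" "finite NU" by (simp_all add: A_def NU_def)
    have s1: "(\<Sum>S\<in>Ev k. ind (vS d S xs \<in> H xs)) = real (card A)"
      by (simp add: A_def ind_def sum.inter_filter[symmetric])
    have injA: "inj_on (\<lambda>S. vS d S xs) (A - NU)" by (auto simp: inj_on_def A_def NU_def)
    have "card (A - NU) \<le> card (H xs)"
      using card_inj_on_le[OF injA] H[OF xs] by (auto simp: A_def)
    then have c1: "card (A - NU) \<le> B" using H[OF xs] by simp
    have "card A \<le> card ((A - NU) \<union> NU)" using finA by (intro card_mono) auto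
    also have "\<dots> \<le> card (A - NU) + card NU" by (rule card_Un_le)
    finally have "card A \<le> card (A - NU) + card NU" .
    then have cA: "card A \<le> B + card NU" using c1 by simp
    have cNU: "real (card NU) \<le> ?X xs"
    proof -
      have "real (card NU) = (\<Sum>S\<in>NU. 1)" by simp
      also have "\<dots> \<le> (\<Sum>S\<in>NU. \<Sum>S'\<in>Ev k - {S}. ind (vS d S' xs = vS d S xs))"
      proof (rule sum_mono)
        fix S assume "S \<in> NU"
        then obtain S' where S': "S' \<in> Ev k" "S' \<noteq> S" "vS d S' xs = vS d S xs" by (auto simp: NU_def)
        have "1 = ind (vS d S' xs = vS d S xs)" using S' by (simp add: ind_def)
        also have "\<dots> \<le> (\<Sum>S'\<in>Ev k - {S}. ind (vS d S' xs = vS d S xs))"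
          by (rule member_le_sum) (use S' in auto)
        finally show "1 \<le> (\<Sum>S'\<in>Ev k - {S}. ind (vS d S' xs = vS d S xs))" .
      qed
      also have "\<dots> \<le> ?X xs"
        by (rule sum_mono2) (auto simp: NU_def intro!: sum_nonneg)
      finally show ?thesis .
    qed
    have X0: "0 \<le> ?X xs" by (intro sum_nonneg) auto
    show ?thesis
    proof (cases "B = 0")
      case True
      then have "H xs = {}" using H[OF xs] by auto
      then have "A = {}" by (simp add: A_def)
      then show ?thesis using s1 X0 by simp
    next
      case False
      then have B1: "1 \<le> real B" by simp
      have "1 * ?X xs \<le> real B * ?X xs" by (rule mult_right_mono[OF B1 X0])
      then have "real (card NU) \<le> real B * ?X xs" using cNU by simp
      then show ?thesis using s1 cA by linarith
    qed
  qed
  have "(\<Sum>xs\<in>LL d k. \<Sum>S\<in>Ev k. ind (vS d S xs \<in> H xs)) \<le> (\<Sum>xs\<in>LL d k. real B + real B * ?X xs)"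
    by (rule sum_mono) (rule per)
  also have "\<dots> = real B * (2^d)^k + real B * (\<Sum>xs\<in>LL d k. ?X xs)"
    by (simp add: sum.distrib sum_distrib_left card_LL)
  also have "(\<Sum>xs\<in>LL d k. ?X xs) = (\<Sum>S\<in>Ev k. \<Sum>S'\<in>Ev k - {S}. \<Sum>xs\<in>LL d k. ind (vS d S' xs = vS d S xs))"
    by (simp add: sum.swap[of _ "LL d k"])
  also have "\<dots> = (\<Sum>S\<in>Ev k. \<Sum>S'\<in>Ev k - {S}. (2^d)^k / 2^d)"
    by (intro sum.cong refl collision) (auto simp: Ev_def)
  also have "\<dots> \<le> (\<Sum>S\<in>Ev k. \<Sum>S'\<in>Ev k. (2^d)^k / 2^d)"
    by (intro sum_mono sum_mono2) auto
  also have "\<dots> = real (card (Ev k))^2 * (2^d)^k / 2^d" by (simp add: power2_eq_square)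
  finally show ?thesis by (simp add: mult_left_mono mult.assoc)
qed

lemma sum_ind_card: "finite A \<Longrightarrow> (\<Sum>x\<in>A. ind (P x)) = real (card {x\<in>A. P x})"
  by (simp add: ind_def sum.inter_filter[symmetric])

lemma round_bound:
  assumes adv: "erasure_adversary d t adv" and far: "eps_far d \<epsilon> f" and eps: "0 < \<epsilon>" "\<epsilon> < 1"
    and k: "k \<ge> 2" and fin: "finite E" and cE: "card E + t * Suc k \<le> B"
  shows "(\<Sum>S\<in>Ev k. \<Sum>xs\<in>LL d k. ind (\<not> ok S (newans f adv (rq d S xs) (h,E))))
     \<ge> real (card (Ev k)) * (2^d)^k * (\<epsilon>/4 - real B * (k/2^d + 1/card (Ev k) + card (Ev k)/2^d))"
proof -
  let ?st = "(h, E)"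
  let ?N = "real (card (Ev k))"
  let ?viol = "\<lambda>S xs. (\<Prod>i\<in>S. sg (f (xs!i))) * sg (f (vS d S xs)) = -1"
  let ?G = "\<lambda>zs. snd (run f adv zs ?st)"
  have N2: "?N \<ge> 2"
  proof -
    have "2^(k-1) \<le> card (Ev k)" using card_Ev_ge[of k] k by simp
    moreover have "(2::nat)^1 \<le> 2^(k-1)" by (rule power_increasing) (use k in auto)
    ultimately have "2 \<le> card (Ev k)" by simp
    then show ?thesis by simp
  qed
  have P: "(\<Sum>S\<in>Ev k. \<Sum>xs\<in>LL d k. ind (?viol S xs) - (\<Sum>j<k. ind (xs!j \<in> ?G (take j xs))) - ind (vS d S xs \<in> ?G xs))
        \<le> (\<Sum>S\<in>Ev k. \<Sum>xs\<in>LL d k. ind (\<not> ok S (newans f adv (rq d S xs) ?st)))"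
    by (intro sum_mono pointwise) auto
  have V: "(\<Sum>S\<in>Ev k. \<Sum>xs\<in>LL d k. ind (?viol S xs)) \<ge> ?N * (2^d)^k * \<epsilon> / 4"
  proof -
    have "(\<Sum>S\<in>Ev k. \<Sum>xs\<in>LL d k. ind (?viol S xs)) \<ge> (\<Sum>S\<in>Ev k. (2^d)^k * \<epsilon> / 2 - (if S = {} then (2^d)^k * \<epsilon> / 2 else 0))"
    proof (rule sum_mono)
      fix S assume S: "S \<in> Ev k"
      show "(2^d)^k * \<epsilon> / 2 - (if S = {} then (2^d)^k * \<epsilon> / 2 else 0) \<le> (\<Sum>xs\<in>LL d k. ind (?viol S xs))"
      proof (cases "S = {}")
        case True then show ?thesis by (simp add: sum_nonneg)
      next
        case False
        have "real (card (LL d k)) * \<epsilon> / 2 \<le> real (card {xs\<in>LL d k. ?viol S xs})"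
          by (rule violation_count[OF far eps]) (use S False in \<open>auto simp: Ev_def\<close>)
        then show ?thesis using False by (simp add: sum_ind_card card_LL)
      qed
    qed
    also have "(\<Sum>S\<in>Ev k. (2^d)^k * \<epsilon> / 2 - (if S = {} then (2^d)^k * \<epsilon> / 2 else 0)) = ?N * ((2^d)^k * \<epsilon> / 2) - (2^d)^k * \<epsilon> / 2"
    proof -
      have "{} \<in> Ev k" by (simp add: Ev_def)
      then show ?thesis by (simp add: sum_subtractf sum.delta')
    qed
    finally have "?N * ((2^d)^k * \<epsilon> / 2) - (2^d)^k * \<epsilon> / 2 \<le> (\<Sum>S\<in>Ev k. \<Sum>xs\<in>LL d k. ind (?viol S xs))" .
    moreover have "?N * (2^d)^k * \<epsilon> / 4 \<le> ?N * ((2^d)^k * \<epsilon> / 2) - (2^d)^k * \<epsilon> / 2"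
    proof -
      have "0 \<le> ((2::real)^d)^k * \<epsilon>" using eps by simp
      then have "(?N - 2) * (((2::real)^d)^k * \<epsilon>) \<ge> 0" using N2 by simp
      then show ?thesis by (simp add: algebra_simps)
    qed
    ultimately show ?thesis by linarith
  qed
  have X1: "(\<Sum>S\<in>Ev k. \<Sum>xs\<in>LL d k. \<Sum>j<k. ind (xs!j \<in> ?G (take j xs))) \<le> ?N * (k * (real B * (2^d)^k / 2^d))"
  proof -
    have "(\<Sum>xs\<in>LL d k. \<Sum>j<k. ind (xs!j \<in> ?G (take j xs))) = (\<Sum>j<k. \<Sum>xs\<in>LL d k. ind (xs!j \<in> ?G (take j xs)))"
      by (rule sum.swap)
    also have "\<dots> \<le> (\<Sum>j<k. real B * (2^d)^k / 2^d)"
    proof (rule sum_mono)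
      fix j assume j: "j \<in> {..<k}"
      show "(\<Sum>xs\<in>LL d k. ind (xs!j \<in> ?G (take j xs))) \<le> real B * (2^d)^k / 2^d"
      proof (rule count_prefix)
        show "j < k" using j by simp
        fix zs :: "bool list list" assume "length zs = j"
        then have "t * length zs \<le> t * Suc k" using j by (intro mult_le_mono2) auto
        then show "finite (?G zs) \<and> card (?G zs) \<le> B"
          using run_erased_card[OF adv fin, of f zs h] cE by auto
      qed
    qed
    also have "\<dots> = k * (real B * (2^d)^k / 2^d)" by simp
    finally have le: "(\<Sum>xs\<in>LL d k. \<Sum>j<k. ind (xs!j \<in> ?G (take j xs))) \<le> k * (real B * (2^d)^k / 2^d)" .
    have "(\<Sum>S\<in>Ev k. \<Sum>xs\<in>LL d k. \<Sum>j<k. ind (xs!j \<in> ?G (take j xs))) = ?N * (\<Sum>xs\<in>LL d k. \<Sum>j<k. ind (xs!j \<in> ?G (take j xs)))"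
      by (simp only: sum_constant)
    moreover have "?N * (\<Sum>xs\<in>LL d k. \<Sum>j<k. ind (xs!j \<in> ?G (take j xs))) \<le> ?N * (k * (real B * (2^d)^k / 2^d))"
      by (rule mult_left_mono[OF le]) simp
    ultimately show ?thesis by simp
  qed
  have X2: "(\<Sum>S\<in>Ev k. \<Sum>xs\<in>LL d k. ind (vS d S xs \<in> ?G xs)) \<le> real B * (2^d)^k + real B * ?N^2 * (2^d)^k / 2^d"
  proof -
    have "(\<Sum>S\<in>Ev k. \<Sum>xs\<in>LL d k. ind (vS d S xs \<in> ?G xs)) = (\<Sum>xs\<in>LL d k. \<Sum>S\<in>Ev k. ind (vS d S xs \<in> ?G xs))"
      by (rule sum.swap)
    also have "\<dots> \<le> real B * (2^d)^k + real B * ?N^2 * (2^d)^k / 2^d"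
    proof (rule count_last)
      fix xs assume "xs \<in> LL d k"
      then have "length xs = k" by (simp add: LL_def)
      then have "t * length xs \<le> t * Suc k" by (intro mult_le_mono2) auto
      then show "finite (?G xs) \<and> card (?G xs) \<le> B"
        using run_erased_card[OF adv fin, of f xs h] cE by auto
    qed
    finally show ?thesis .
  qed
  have "(\<Sum>S\<in>Ev k. \<Sum>xs\<in>LL d k. ind (?viol S xs) - (\<Sum>j<k. ind (xs!j \<in> ?G (take j xs))) - ind (vS d S xs \<in> ?G xs))
     = (\<Sum>S\<in>Ev k. \<Sum>xs\<in>LL d k. ind (?viol S xs)) - (\<Sum>S\<in>Ev k. \<Sum>xs\<in>LL d k. \<Sum>j<k. ind (xs!j \<in> ?G (take j xs)))
       - (\<Sum>S\<in>Ev k. \<Sum>xs\<in>LL d k. ind (vS d S xs \<in> ?G xs))"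
    by (simp add: sum_subtractf)
  then have main: "(\<Sum>S\<in>Ev k. \<Sum>xs\<in>LL d k. ind (\<not> ok S (newans f adv (rq d S xs) ?st)))
     \<ge> ?N * (2^d)^k * \<epsilon> / 4 - ?N * (k * (real B * (2^d)^k / 2^d)) - (real B * (2^d)^k + real B * ?N^2 * (2^d)^k / 2^d)"
    using P V X1 X2 by linarith
  have "?N * (2^d)^k * \<epsilon> / 4 - ?N * (k * (real B * (2^d)^k / 2^d)) - (real B * (2^d)^k + real B * ?N^2 * (2^d)^k / 2^d)
      = ?N * (2^d)^k * (\<epsilon>/4 - real B * (k/2^d + 1/?N + ?N/2^d))"
  proof -
    have ne: "Ev k \<noteq> {}" using N2 by auto
    show ?thesis using ne by (simp add: field_simps power2_eq_square)
  qed
  then show ?thesis using main by simp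
qed

lemma prob_bind_pmf: "measure_pmf.prob (bind_pmf p g) A = (\<integral>x. measure_pmf.prob (g x) A \<partial>p)"
  unfolding measure_pmf_bind
  by (rule measure_pmf.measure_bind[where N="count_space UNIV"])
     (auto simp: measurable_def measure_pmf_in_subprob_algebra)

definition rnd :: "nat \<Rightarrow> nat \<Rightarrow> (nat set \<times> bool list list) pmf" where
  "rnd d k = pmf_of_set (Ev k \<times> LL d k)"

fun tst :: "nat \<Rightarrow> nat \<Rightarrow> nat \<Rightarrow> nonadaptive_tester" where
  "tst d k 0 = return_pmf ([], \<lambda>_. True)"
| "tst d k (Suc n) = bind_pmf (rnd d k) (\<lambda>(S,xs). map_pmf (\<lambda>(qs,dec). (rq d S xs @ qs,
      \<lambda>ans. ok S (take (Suc k) ans) \<and> dec (drop (Suc k) ans))) (tst d k n))"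

lemma Omega_ne: "Ev k \<times> LL d k \<noteq> {}"
proof -
  have "{} \<in> Ev k" by (simp add: Ev_def)
  moreover have "replicate k (replicate d False) \<in> LL d k" by (auto simp: LL_def cube_def)
  ultimately show ?thesis by blast
qed

lemma Omega_fin: "finite (Ev k \<times> LL d k)" by simp

lemma set_rnd: "set_pmf (rnd d k) = Ev k \<times> LL d k"
  unfolding rnd_def using Omega_ne Omega_fin by (rule set_pmf_of_set)

definition AP :: "nat \<Rightarrow> nat \<Rightarrow> (bool list \<Rightarrow> bool) \<Rightarrow> (history \<Rightarrow> bool list set) \<Rightarrow> nat
   \<Rightarrow> history \<times> bool list set \<Rightarrow> real" where
  "AP d k f adv n st = measure_pmf.prob (tst d k n) {(qs,dec). dec (newans f adv qs st)}"

lemma AP_Suc: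
  "AP d k f adv (Suc n) st = (\<Sum>(S,xs)\<in>Ev k \<times> LL d k.
      ind (ok S (newans f adv (rq d S xs) st)) * AP d k f adv n (run f adv (rq d S xs) st)) / card (Ev k \<times> LL d k)"
proof -
  have one: "measure_pmf.prob (map_pmf (\<lambda>(qs,dec). (rq d S xs @ qs,
      \<lambda>ans. ok S (take (Suc k) ans) \<and> dec (drop (Suc k) ans))) (tst d k n)) {(qs,dec). dec (newans f adv qs st)}
     = ind (ok S (newans f adv (rq d S xs) st)) * AP d k f adv n (run f adv (rq d S xs) st)"
    if "(S, xs) \<in> Ev k \<times> LL d k" for S xs
  proof -
    have len: "length (newans f adv (rq d S xs) st) = Suc k" using that by (simp add: length_rq)
    have "(\<lambda>(qs,dec). (rq d S xs @ qs, \<lambda>ans. ok S (take (Suc k) ans) \<and> dec (drop (Suc k) ans))) -` {(qs,dec). dec (newans f adv qs st)}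
      = (if ok S (newans f adv (rq d S xs) st) then {(qs,dec). dec (newans f adv qs (run f adv (rq d S xs) st))} else {})"
      using len by (auto simp: newans_append)
    then show ?thesis by (simp add: AP_def ind_def)
  qed
  have "AP d k f adv (Suc n) st = (\<integral>p. (case p of (S,xs) \<Rightarrow> ind (ok S (newans f adv (rq d S xs) st)) * AP d k f adv n (run f adv (rq d S xs) st)) \<partial>rnd d k)"
    unfolding AP_def[of d k f adv "Suc n"] tst.simps prob_bind_pmf
    by (intro integral_cong_AE) (auto simp del: measure_map_pmf simp: AE_measure_pmf_iff set_rnd one split: prod.splits)
  also have "\<dots> = (\<Sum>(S,xs)\<in>Ev k \<times> LL d k. ind (ok S (newans f adv (rq d S xs) st)) * AP d k f adv n (run f adv (rq d S xs) st)) / card (Ev k \<times> LL d k)"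
    unfolding rnd_def by (rule integral_pmf_of_set[OF Omega_ne Omega_fin])
  finally show ?thesis .
qed

lemma AP_0: "AP d k f adv 0 st = 1"
  by (simp add: AP_def)

lemma sum_pairs: "(\<Sum>(S,xs)\<in>A \<times> B. g S xs) = (\<Sum>S\<in>A. \<Sum>xs\<in>B. (g S xs :: real))"
  by (rule sum.cartesian_product[symmetric])

lemma aux_div: "(M::real) > 0 \<Longrightarrow> a * (M - M * g) / M = a * (1 - g)"
  by (simp add: field_simps)

lemma AP_bound:
  assumes adv: "erasure_adversary d t adv" and far: "eps_far d \<epsilon> f" and eps: "0 < \<epsilon>" "\<epsilon> < 1"
    and k: "k \<ge> 2"
    and \<gamma>: "\<gamma> = \<epsilon>/4 - real B * (k/2^d + 1/card (Ev k) + card (Ev k)/2^d)" "0 \<le> \<gamma>"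
  shows "finite E \<Longrightarrow> card E + t * Suc k * n \<le> B \<Longrightarrow> AP d k f adv n (h, E) \<le> (1 - \<gamma>)^n"
proof (induction n arbitrary: h E)
  case 0 then show ?case by (simp add: AP_0)
next
  case (Suc n)
  let ?\<Omega> = "Ev k \<times> LL d k"
  let ?M = "real (card ?\<Omega>)"
  have g1: "\<gamma> \<le> 1"
  proof -
    have "0 \<le> real B * (k/2^d + 1/card (Ev k) + card (Ev k)/2^d)" by simp
    then show ?thesis using \<gamma>(1) eps by linarith
  qed
  have Mpos: "?M > 0" using Omega_ne Omega_fin by (simp add: card_gt_0_iff)
  have cM: "?M = real (card (Ev k)) * (2^d)^k" by (simp add: card_cartesian_product card_LL)
  have cE1: "card E + t * Suc k \<le> B" using Suc.prems(2) by (simp add: algebra_simps)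
  have step: "ind (ok S (newans f adv (rq d S xs) (h,E))) * AP d k f adv n (run f adv (rq d S xs) (h,E))
       \<le> ind (ok S (newans f adv (rq d S xs) (h,E))) * (1-\<gamma>)^n" if "(S,xs) \<in> ?\<Omega>" for S xs
  proof -
    obtain h' E' where r: "run f adv (rq d S xs) (h,E) = (h', E')" by (cases "run f adv (rq d S xs) (h,E)")
    have "finite E'" "card E' \<le> card E + t * length (rq d S xs)"
      using run_erased_card[OF adv Suc.prems(1), of f "rq d S xs" h] r by auto
    then have "finite E'" "card E' + t * Suc k * n \<le> B"
      using that Suc.prems(2) by (auto simp: length_rq algebra_simps)
    then have "AP d k f adv n (h', E') \<le> (1-\<gamma>)^n" by (rule Suc.IH)
    then show ?thesis unfolding r by (intro mult_left_mono) auto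
  qed
  have "AP d k f adv (Suc n) (h,E) \<le> (\<Sum>(S,xs)\<in>?\<Omega>. ind (ok S (newans f adv (rq d S xs) (h,E))) * (1-\<gamma>)^n) / ?M"
    unfolding AP_Suc using Mpos
    by (intro divide_right_mono sum_mono) (use step in auto)
  also have "(\<Sum>(S,xs)\<in>?\<Omega>. ind (ok S (newans f adv (rq d S xs) (h,E))) * (1-\<gamma>)^n)
      = (1-\<gamma>)^n * (?M - (\<Sum>S\<in>Ev k. \<Sum>xs\<in>LL d k. ind (\<not> ok S (newans f adv (rq d S xs) (h,E)))))"
  proof -
    have "(\<Sum>(S,xs)\<in>?\<Omega>. ind (ok S (newans f adv (rq d S xs) (h,E))) * (1-\<gamma>)^n)
        = (\<Sum>S\<in>Ev k. \<Sum>xs\<in>LL d k. (1 - ind (\<not> ok S (newans f adv (rq d S xs) (h,E)))) * (1-\<gamma>)^n)"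
      unfolding sum_pairs by (intro sum.cong refl) (simp add: ind_def)
    also have "\<dots> = (1-\<gamma>)^n * (\<Sum>S\<in>Ev k. \<Sum>xs\<in>LL d k. 1 - ind (\<not> ok S (newans f adv (rq d S xs) (h,E))))"
      by (simp add: sum_distrib_left mult.commute)
    also have "(\<Sum>S\<in>Ev k. \<Sum>xs\<in>LL d k. 1 - ind (\<not> ok S (newans f adv (rq d S xs) (h,E))))
        = ?M - (\<Sum>S\<in>Ev k. \<Sum>xs\<in>LL d k. ind (\<not> ok S (newans f adv (rq d S xs) (h,E))))"
      by (simp add: sum_subtractf cM card_LL)
    finally show ?thesis .
  qed
  also have "(1-\<gamma>)^n * (?M - (\<Sum>S\<in>Ev k. \<Sum>xs\<in>LL d k. ind (\<not> ok S (newans f adv (rq d S xs) (h,E))))) / ?M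
      \<le> (1-\<gamma>)^n * (?M - ?M * \<gamma>) / ?M"
  proof -
    have "(\<Sum>S\<in>Ev k. \<Sum>xs\<in>LL d k. ind (\<not> ok S (newans f adv (rq d S xs) (h,E)))) \<ge> ?M * \<gamma>"
      using round_bound[OF adv far eps k Suc.prems(1) cE1, of h] \<gamma>(1) by (simp add: card_cartesian_product card_LL)
    moreover have "0 \<le> (1-\<gamma>)^n" using g1 by simp
    ultimately show ?thesis using Mpos by (intro divide_right_mono mult_left_mono) auto
  qed
  also have "\<dots> = (1-\<gamma>)^Suc n" using aux_div[OF Mpos, of "(1-\<gamma>)^n" \<gamma>] by (simp add: mult.commute)
  finally show ?case .
qed

lemma ok_linear:
  assumes lin: "linear_fn d f" and S: "S \<in> Ev k" and xs: "xs \<in> LL d k"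
  shows "ok S (newans f adv (rq d S xs) st)"
proof (cases "None \<in> set (newans f adv (rq d S xs) st)")
  case True then show ?thesis by (simp add: ok_def)
next
  case False
  let ?A = "newans f adv (rq d S xs) st"
  have lA: "length ?A = Suc k" using xs by (simp add: length_rq)
  have A: "?A ! j = Some (f (rq d S xs ! j))" if "j < Suc k" for j
  proof -
    have "?A ! j \<in> set ?A" using that lA by simp
    then have "?A ! j \<noteq> None" using False by metis
    then show ?thesis using that xs by (simp add: newans_nth length_rq split: if_splits)
  qed
  have Sk: "S \<subseteq> {..<k}" using S by (simp add: Ev_def)
  have "(\<Prod>i\<in>S. sg (the (?A ! i))) = (\<Prod>i\<in>S. sg (f (xs!i)))"
    using Sk by (intro prod.cong refl) (auto simp: A rq_nth_lt[OF xs])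
  moreover have "last ?A = Some (f (vS d S xs))"
  proof -
    have "?A \<noteq> []"
    proof
      assume "?A = []" then have "length ?A = 0" by (simp only: list.size)
      with lA show False by simp
    qed
    then have "last ?A = ?A ! (length ?A - 1)" by (rule last_conv_nth)
    then have "last ?A = ?A ! k" using lA by simp
    then show ?thesis using A[of k] by (simp add: rq_nth_k[OF xs])
  qed
  ultimately show ?thesis using linear_pass[OF lin Sk xs] by (simp add: ok_def)
qed

lemma tst_linear:
  assumes lin: "linear_fn d f"
  shows "(qs, dec) \<in> set_pmf (tst d k n) \<Longrightarrow> dec (newans f adv qs st)"
proof (induction n arbitrary: qs dec st)
  case 0 then show ?case by simp
next
  case (Suc n)
  from Suc.prems obtain S xs qs' dec' where
    w: "(S, xs) \<in> Ev k \<times> LL d k" "(qs', dec') \<in> set_pmf (tst d k n)"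
       "qs = rq d S xs @ qs'" "dec = (\<lambda>ans. ok S (take (Suc k) ans) \<and> dec' (drop (Suc k) ans))"
    by (auto simp: set_rnd)
  have len: "length (newans f adv (rq d S xs) st) = Suc k" using w(1) by (simp add: length_rq)
  show ?case using w len ok_linear[OF lin, of S k xs adv st] Suc.IH[OF w(2)]
    by (auto simp: newans_append)
qed

lemma tst_set:
  "(qs, dec) \<in> set_pmf (tst d k n) \<Longrightarrow> length qs = n * Suc k \<and> set qs \<subseteq> cube d"
proof (induction n arbitrary: qs dec)
  case 0 then show ?case by simp
next
  case (Suc n)
  from Suc.prems obtain S xs qs' dec' where
    w: "(S, xs) \<in> Ev k \<times> LL d k" "(qs', dec') \<in> set_pmf (tst d k n)" "qs = rq d S xs @ qs'"
    by (auto simp: set_rnd)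
  show ?case using w Suc.IH[OF w(2)] by (auto simp: rq_def LL_def)
qed

lemma prob_one: "(\<And>x. x \<in> set_pmf p \<Longrightarrow> x \<in> A) \<Longrightarrow> measure_pmf.prob p A = 1"
  by (subst measure_pmf.prob_eq_1) (auto simp: AE_measure_pmf_iff)

lemma bern: "0 \<le> x \<Longrightarrow> x \<le> 1 \<Longrightarrow> (1 - x)^n * (1 + real n * x) \<le> (1::real)"
proof (induction n)
  case 0 then show ?case by simp
next
  case (Suc n)
  have a: "0 \<le> (1 - x)^n" using Suc by simp
  have "(1 - x)^Suc n * (1 + real (Suc n) * x) = (1-x)^n * (1 + real n * x - real (Suc n) * x * x)"
    by (simp add: algebra_simps)
  also have "\<dots> \<le> (1-x)^n * (1 + real n * x)"
    using a Suc.prems by (intro mult_left_mono) auto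
  also have "\<dots> \<le> 1" using Suc by simp
  finally show ?case .
qed

lemma ln_half: "1/2 \<le> ln (2::real)"
proof -
  have "exp (1/2::real) * exp (1/2) = exp 1" by (simp add: exp_add[symmetric])
  also have "\<dots> \<le> 4" using exp_le by simp
  finally have sq: "exp (1/2::real) * exp (1/2) \<le> 2 * 2" by simp
  have "exp (1/2::real) \<le> 2"
  proof (rule ccontr)
    assume "\<not> exp (1/2::real) \<le> 2"
    then have "2 * 2 < exp (1/2::real) * exp (1/2)" by (intro mult_strict_mono) auto
    then show False using sq by simp
  qed
  then show ?thesis by (metis exp_gt_zero exp_le_cancel_iff exp_ln zero_less_numeral)
qed

lemma ln_inv_sq: assumes "0 < e" "e \<le> (1::real)" shows "ln (1/e)^2 * e \<le> 4"
proof -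
  have s: "sqrt (1/e) > 0" using assms by simp
  have "ln (1/e) = 2 * ln (sqrt (1/e))" using assms by (simp add: ln_sqrt)
  also have "\<dots> \<le> 2 * sqrt (1/e)" using ln_le_minus_one[OF s] by simp
  finally have u: "ln (1/e) \<le> 2 * sqrt (1/e)" .
  have l: "0 \<le> ln (1/e)" using assms by simp
  have "ln (1/e)^2 \<le> (2 * sqrt (1/e))^2" using u l by (intro power_mono) auto
  also have "\<dots> = 4 / e" using assms by (simp add: power_mult_distrib)
  finally show ?thesis using assms by (simp add: field_simps)
qed

lemma two_pow_ge: "3 \<le> m \<Longrightarrow> 2 * m + 1 \<le> (2::nat)^m"
proof (induction m rule: dec_induct)
  case base then show ?case by simp
next
  case (step n) then show ?case by simp
qed

definition RR :: "real \<Rightarrow> nat" where "RR \<epsilon> = nat \<lceil>16 / \<epsilon>\<rceil>"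
definition ZZ :: "nat \<Rightarrow> real \<Rightarrow> real" where "ZZ t \<epsilon> = 48 * real t * real (RR \<epsilon>) / \<epsilon>"
definition kk :: "nat \<Rightarrow> real \<Rightarrow> nat" where "kk t \<epsilon> = (LEAST k. 2 \<le> k \<and> ZZ t \<epsilon> * real (k + 1) \<le> 2^k)"

lemma RR_bounds: assumes "0 < \<epsilon>" "\<epsilon> < 1"
  shows "16 / \<epsilon> \<le> real (RR \<epsilon>)" "real (RR \<epsilon>) \<le> 17 / \<epsilon>" "1 \<le> RR \<epsilon>"
proof -
  show a: "16 / \<epsilon> \<le> real (RR \<epsilon>)" unfolding RR_def by (rule real_nat_ceiling_ge)
  have "0 < 16 / \<epsilon>" using assms by simp
  then have c0: "0 \<le> \<lceil>16 / \<epsilon>\<rceil>" using ceiling_le_zero[of "16/\<epsilon>"] by linarith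
  have "real (RR \<epsilon>) = real_of_int \<lceil>16 / \<epsilon>\<rceil>" unfolding RR_def using c0 by simp
  then have "real (RR \<epsilon>) \<le> 16 / \<epsilon> + 1" using of_int_ceiling_le_add_one[of "16/\<epsilon>"] by linarith
  moreover have "1 \<le> 1 / \<epsilon>" using assms by simp
  ultimately show "real (RR \<epsilon>) \<le> 17 / \<epsilon>" by simp
  have "16 / \<epsilon> \<ge> 1" using assms by (simp add: field_simps)
  then show "1 \<le> RR \<epsilon>" using a by simp
qed

lemma kk_t0: "kk 0 \<epsilon> = 2"
proof -
  have "(LEAST k. 2 \<le> k \<and> ZZ 0 \<epsilon> * real (k + 1) \<le> 2^k) = 2"
    by (rule Least_equality) (auto simp: ZZ_def)
  then show ?thesis by (simp add: kk_def)
qed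

lemma pow4_eps: "0 < (e::real) \<Longrightarrow> (e powr (5/4))^4 = e^5"
proof -
  assume e: "0 < e"
  have "(e powr (5/4))^4 = e powr (real 4 * (5/4))" using e by (subst powr_power) auto
  also have "\<dots> = e powr 5" by simp
  also have "\<dots> = e^5" using e by simp
  finally show ?thesis .
qed

lemma pow4_two: "(2 powr (real d / 4))^4 = (2::real)^d"
proof -
  have "(2 powr (real d / 4))^4 = (2::real) powr (real 4 * (real d / 4))" by (subst powr_power) auto
  also have "\<dots> = 2 powr (real d)" by simp
  also have "\<dots> = 2^d" by (simp add: powr_realpow)
  finally show ?thesis .
qed

lemma pow_log: "1 < (x::real) \<Longrightarrow> 2 powr (10 + 2 * log 2 x) = 1024 * x^2"
proof -
  assume x: "1 < x"
  have "2 powr (10 + 2 * log 2 x) = 2 powr 10 * 2 powr (log 2 x * 2)" by (simp add: powr_add mult.commute)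
  also have "2 powr (log 2 x * 2) = (2 powr (log 2 x)) powr 2" by (simp add: powr_powr)
  also have "\<dots> = x^2" using x by simp
  finally show ?thesis by simp
qed

lemma le_div_self: "0 \<le> a \<Longrightarrow> 0 < e \<Longrightarrow> e \<le> 1 \<Longrightarrow> a \<le> a / (e::real)"
  by (simp add: le_divide_eq mult_left_le)

lemma kk_props:
  assumes eps: "0 < \<epsilon>" "\<epsilon> < 1" and t: "1 \<le> t"
  shows "2 \<le> kk t \<epsilon>" "ZZ t \<epsilon> * real (kk t \<epsilon> + 1) \<le> 2^(kk t \<epsilon>)"
        "2^(kk t \<epsilon>) \<le> 2 * ZZ t \<epsilon> * real (kk t \<epsilon>)"
        "real (kk t \<epsilon>) + 1 \<le> 8 * ln (real t / \<epsilon>) + 23"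
proof -
  let ?x = "real t / \<epsilon>"
  let ?P = "\<lambda>k. 2 \<le> k \<and> ZZ t \<epsilon> * real (k + 1) \<le> 2^k"
  have x1: "1 < ?x" using eps t by (simp add: field_simps)
  have lx: "0 < log 2 ?x" using x1 by simp
  define m where "m = nat \<lceil>2 * log 2 ?x\<rceil> + 10"
  have m_lo: "10 + 2 * log 2 ?x \<le> real m"
    unfolding m_def using real_nat_ceiling_ge[of "2 * log 2 ?x"] by simp
  have m_hi: "real m \<le> 2 * log 2 ?x + 11"
  proof -
    have "0 \<le> \<lceil>2 * log 2 ?x\<rceil>" using lx ceiling_le_zero[of "2 * log 2 ?x"] by linarith
    then have "real (nat \<lceil>2 * log 2 ?x\<rceil>) = real_of_int \<lceil>2 * log 2 ?x\<rceil>" by simp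
    moreover have "real m = real (nat \<lceil>2 * log 2 ?x\<rceil>) + 10" by (simp add: m_def)
    ultimately show ?thesis using of_int_ceiling_le_add_one[of "2 * log 2 ?x"] by linarith
  qed
  have R: "16 / \<epsilon> \<le> real (RR \<epsilon>)" "real (RR \<epsilon>) \<le> 17 / \<epsilon>" "1 \<le> RR \<epsilon>" using RR_bounds[OF eps] by auto
  have Zle: "ZZ t \<epsilon> \<le> 1024 * ?x^2"
  proof -
    have "ZZ t \<epsilon> = 48 * real t * real (RR \<epsilon>) / \<epsilon>" by (simp add: ZZ_def)
    also have "\<dots> \<le> 48 * real t * (17 / \<epsilon>) / \<epsilon>"
      using R eps by (intro divide_right_mono mult_left_mono) auto
    also have "\<dots> \<le> 48 * (real t * real t) * 17 / (\<epsilon> * \<epsilon>)"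
    proof -
      have "real t \<le> real t * real t" using t by simp
      then show ?thesis using eps by (simp add: field_simps)
    qed
    also have "\<dots> \<le> 1024 * ?x^2" using eps by (simp add: power2_eq_square field_simps)
    finally show ?thesis .
  qed
  have pm: "1024 * ?x^2 \<le> 2^m"
  proof -
    have "1024 * ?x^2 = 2 powr (10 + 2 * log 2 ?x)" using pow_log[OF x1] by simp
    also have "\<dots> \<le> 2 powr (real m)" using m_lo by (intro powr_mono) auto
    also have "\<dots> = 2^m" by (simp add: powr_realpow)
    finally show ?thesis .
  qed
  have m3: "2 * m + 1 \<le> 2^m" using two_pow_ge[of m] by (simp add: m_def)
  have Z0: "0 \<le> ZZ t \<epsilon>" using eps by (simp add: ZZ_def)
  have P2m: "?P (2*m)"
  proof
    show "2 \<le> 2 * m" by (simp add: m_def)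
    have a: "ZZ t \<epsilon> \<le> 2^m" using Zle pm by linarith
    have "real (2 * m + 1) \<le> real ((2::nat)^m)" by (rule of_nat_mono[OF m3])
    then have b: "real (2 * m + 1) \<le> 2^m" by (simp only: of_nat_power of_nat_numeral)
    have "ZZ t \<epsilon> * real (2 * m + 1) \<le> 2^m * 2^m"
      by (rule mult_mono[OF a b]) auto
    moreover have "(2::real)^(2*m) = 2^m * 2^m" by (simp only: mult_2 power_add)
    ultimately show "ZZ t \<epsilon> * real (2 * m + 1) \<le> 2^(2*m)" by linarith
  qed
  have Pk: "?P (kk t \<epsilon>)" unfolding kk_def by (rule LeastI[of ?P, OF P2m])
  then show "2 \<le> kk t \<epsilon>" "ZZ t \<epsilon> * real (kk t \<epsilon> + 1) \<le> 2^(kk t \<epsilon>)" by auto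
  have kle: "kk t \<epsilon> \<le> 2 * m" unfolding kk_def by (rule Least_le[of ?P, OF P2m])
  have Z48: "48 \<le> ZZ t \<epsilon>"
  proof -
    have "48 * 1 * 1 \<le> 48 * real t * real (RR \<epsilon>)" using t R by (intro mult_mono) auto
    also have "\<dots> \<le> 48 * real t * real (RR \<epsilon>) / \<epsilon>"
      by (rule le_div_self) (use eps in auto)
    finally show ?thesis by (simp add: ZZ_def)
  qed
  show "2^(kk t \<epsilon>) \<le> 2 * ZZ t \<epsilon> * real (kk t \<epsilon>)"
  proof (cases "kk t \<epsilon> = 2")
    case True then show ?thesis using Z48 by simp
  next
    case False
    then have k3: "3 \<le> kk t \<epsilon>" using Pk by auto
    have "\<not> ?P (kk t \<epsilon> - 1)"
      unfolding kk_def by (rule not_less_Least) (use k3 in \<open>simp add: kk_def\<close>)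
    then have "2^(kk t \<epsilon> - 1) < ZZ t \<epsilon> * real (kk t \<epsilon>)" using k3 by (auto simp: not_le)
    moreover have "(2::real)^(kk t \<epsilon>) = 2 * 2^(kk t \<epsilon> - 1)" using k3
      by (metis Suc_diff_1 less_le_trans numeral_3_eq_3 power_Suc zero_less_Suc)
    ultimately show ?thesis by simp
  qed
  have "real (kk t \<epsilon>) + 1 \<le> 2 * real m + 1" using kle by simp
  also have "\<dots> \<le> 4 * log 2 ?x + 23" using m_hi by simp
  also have "log 2 ?x \<le> 2 * ln ?x"
  proof -
    have "log 2 ?x = ln ?x / ln 2" by (simp add: log_def)
    also have "\<dots> \<le> ln ?x / (1/2)" using ln_half x1 by (intro divide_left_mono) auto
    finally show ?thesis by simp
  qed
  then have "4 * log 2 ?x + 23 \<le> 8 * ln ?x + 23" by simp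
  finally show "real (kk t \<epsilon>) + 1 \<le> 8 * ln (real t / \<epsilon>) + 23" .
qed

lemma sq3: "((a::real) + b + c)^2 \<le> 3 * (a^2 + b^2 + c^2)"
proof -
  have "0 \<le> (a - b)^2 + (b - c)^2 + (a - c)^2" by simp
  then show ?thesis by (simp add: power2_eq_square algebra_simps)
qed

lemma Qbound:
  assumes eps: "0 < \<epsilon>" "\<epsilon> < 1" and t: "1 \<le> t" and k: "real k + 1 \<le> 8 * ln (real t / \<epsilon>) + 23"
  shows "(real k + 1)^2 * \<epsilon> \<le> 2547 * (real t)^2"
proof -
  let ?a = "ln (real t)" and ?b = "ln (1/\<epsilon>)"
  have L: "ln (real t / \<epsilon>) = ?a + ?b" using eps t by (simp add: ln_div)
  have a0: "0 \<le> ?a" using t by simp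
  have at: "?a \<le> real t" using ln_le_minus_one[of "real t"] t by simp
  have b0: "0 \<le> ?b" using eps by simp
  have bb: "?b^2 * \<epsilon> \<le> 4" using ln_inv_sq[of \<epsilon>] eps by simp
  have "(real k + 1)^2 \<le> (8 * ?a + 8 * ?b + 23)^2" using k L a0 b0 by (intro power_mono) auto
  also have "\<dots> \<le> 3 * ((8 * ?a)^2 + (8 * ?b)^2 + 23^2)" by (rule sq3)
  finally have s1: "(real k + 1)^2 * \<epsilon> \<le> 3 * ((8 * ?a)^2 + (8 * ?b)^2 + 23^2) * \<epsilon>"
    using eps by (intro mult_right_mono) auto
  have aa: "?a^2 * \<epsilon> \<le> (real t)^2"
  proof -
    have "?a^2 \<le> (real t)^2" using a0 at by (intro power_mono) auto
    moreover have "?a^2 * \<epsilon> \<le> ?a^2" using eps by (intro mult_left_le) auto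
    ultimately show ?thesis by linarith
  qed
  have t2: "1 \<le> (real t)^2" using t by simp
  have "3 * ((8 * ?a)^2 + (8 * ?b)^2 + 23^2) * \<epsilon> = 192 * (?a^2 * \<epsilon>) + 192 * (?b^2 * \<epsilon>) + 1587 * \<epsilon>"
    by (simp add: power_mult_distrib algebra_simps)
  also have "\<dots> \<le> 192 * (real t)^2 + 192 * 4 + 1587 * (real t)^2"
    using aa bb eps t2 by linarith
  also have "\<dots> \<le> 2547 * (real t)^2" using t2 by linarith
  finally show ?thesis using s1 by linarith
qed

lemma gamma_ok:
  assumes eps: "0 < \<epsilon>" "\<epsilon> < 1" and t: "1 \<le> t"
    and hyp: "real t \<le> 1/300 * \<epsilon> powr (5/4) * 2 powr (real d / 4)"
  shows "\<epsilon>/8 \<le> \<epsilon>/4 - real (t * Suc (kk t \<epsilon>) * RR \<epsilon>) *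
     (real (kk t \<epsilon>)/2^d + 1/real (card (Ev (kk t \<epsilon>))) + real (card (Ev (kk t \<epsilon>)))/2^d)"
proof -
  define k where "k = kk t \<epsilon>"
  define R where "R = real (RR \<epsilon>)"
  define N where "N = real (card (Ev k))"
  define B where "B = real t * (real k + 1) * R"
  define Z where "Z = ZZ t \<epsilon>"
  have kp: "2 \<le> k" "Z * real (k + 1) \<le> 2^k" "2^k \<le> 2 * Z * real k" "real k + 1 \<le> 8 * ln (real t / \<epsilon>) + 23"
    using kk_props[OF eps t] by (auto simp: k_def Z_def)
  have Rb: "16 / \<epsilon> \<le> R" "R \<le> 17 / \<epsilon>" "1 \<le> R" using RR_bounds[OF eps] by (auto simp: R_def)
  have Bdef: "real (t * Suc k * RR \<epsilon>) = B" by (simp add: B_def R_def algebra_simps)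
  have B0: "0 \<le> B" using Rb by (simp add: B_def)
  have Nlo: "2^(k-1) \<le> N" using card_Ev_ge[of k] kp(1) unfolding N_def
    by (metis (mono_tags, lifting) le_trans nat_le_linear not_numeral_le_zero of_nat_le_iff of_nat_numeral of_nat_power one_le_numeral le_numeral_extra(4) One_nat_def Suc_1 Suc_le_eq zero_less_numeral)
  have Nhi: "N \<le> 2^k" using card_Ev_le[of k] unfolding N_def
    by (metis of_nat_le_iff of_nat_numeral of_nat_power)
  have pk: "(2::real)^k = 2 * 2^(k-1)" using kp(1)
    by (metis Suc_diff_1 le_trans one_le_numeral power_Suc zero_less_Suc less_le_trans numeral_2_eq_2 Suc_le_eq)
  have Npos: "0 < N" using Nlo by (smt (verit) zero_less_power)
  have Zdef: "Z * real (k + 1) = 48 * B / \<epsilon>" by (simp add: Z_def ZZ_def B_def R_def algebra_simps)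
  have c1: "48 * B \<le> \<epsilon> * 2^k"
  proof -
    have "48 * B / \<epsilon> \<le> 2^k" using kp(2) Zdef by simp
    then show ?thesis using eps by (simp add: divide_le_eq mult.commute)
  qed
  have t1: "B / N \<le> \<epsilon> / 24"
  proof -
    have "0 < N * 2^(k-1)" using Npos by simp
    then have "B / N \<le> B / 2^(k-1)" using Nlo B0 by (intro divide_left_mono) auto
    also have "\<dots> = 2 * B / 2^k" using pk by simp
    also have "\<dots> \<le> \<epsilon> / 24" using c1 by (simp add: divide_le_eq)
    finally show ?thesis .
  qed
  have hyp4: "(real t)^4 \<le> \<epsilon>^5 * 2^d / 8100000000"
  proof -
    have "(real t)^4 \<le> (1/300 * \<epsilon> powr (5/4) * 2 powr (real d / 4))^4" using hyp by (intro power_mono) auto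
    also have "\<dots> = (1/300)^4 * (\<epsilon> powr (5/4))^4 * (2 powr (real d / 4))^4" by (simp only: power_mult_distrib)
    also have "\<dots> = \<epsilon>^5 * 2^d / 8100000000" using eps by (simp add: pow4_eps pow4_two power_divide)
    finally show ?thesis .
  qed
  have Q: "(real k + 1)^2 * \<epsilon> \<le> 2547 * (real t)^2" by (rule Qbound[OF eps t kp(4)])
  have c3: "B * 2^k \<le> \<epsilon> * 2^d / 48"
  proof -
    have "B * 2^k \<le> B * (2 * Z * real k)" using kp(3) B0 by (intro mult_left_mono) auto
    also have "\<dots> = 96 * (real t)^2 * R^2 * real k * (real k + 1) / \<epsilon>"
      by (simp add: B_def Z_def ZZ_def R_def power2_eq_square algebra_simps)
    also have "\<dots> \<le> 96 * (real t)^2 * (17/\<epsilon>)^2 * (real k + 1) * (real k + 1) / \<epsilon>"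
    proof -
      have "R^2 \<le> (17/\<epsilon>)^2" using Rb by (intro power_mono) auto
      moreover have "real k \<le> real k + 1" by simp
      ultimately show ?thesis using eps
        by (intro divide_right_mono mult_mono mult_left_mono) auto
    qed
    also have "\<dots> = 96 * 289 * (real t)^2 * ((real k + 1)^2 * \<epsilon>) / \<epsilon>^4"
      using eps by (simp add: power2_eq_square power4_eq_xxxx field_simps)
    also have "\<dots> \<le> 96 * 289 * (real t)^2 * (2547 * (real t)^2) / \<epsilon>^4"
      using Q eps by (intro divide_right_mono mult_left_mono) auto
    also have "\<dots> = 70663968 * (real t)^4 / \<epsilon>^4" by (simp add: power2_eq_square power4_eq_xxxx)
    also have "\<dots> \<le> 70663968 * (\<epsilon>^5 * 2^d / 8100000000) / \<epsilon>^4"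
      using hyp4 eps by (intro divide_right_mono mult_left_mono) auto
    also have "\<dots> = 70663968 / 8100000000 * (\<epsilon> * 2^d)" proof -
      have e5: "\<epsilon>^5 = \<epsilon> * \<epsilon>^4" by (simp add: numeral_eq_Suc)
      show ?thesis using eps by (simp add: e5 field_simps)
    qed
    also have "\<dots> \<le> \<epsilon> * 2^d / 48" using eps by simp
    finally show ?thesis .
  qed
  have t2: "B * (real k / 2^d) \<le> \<epsilon> / 48"
  proof -
    have "real k \<le> 2^k" using less_exp[of k] by (metis less_imp_le of_nat_le_iff of_nat_numeral of_nat_power)
    then have "B * real k \<le> B * 2^k" using B0 by (intro mult_left_mono)
    then show ?thesis using c3 by (simp add: divide_le_eq field_simps)
  qed
  have t3: "B * (N / 2^d) \<le> \<epsilon> / 48"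
  proof -
    have "B * N \<le> B * 2^k" using Nhi B0 by (intro mult_left_mono)
    then show ?thesis using c3 by (simp add: divide_le_eq field_simps)
  qed
  have "B * (real k/2^d + 1/N + N/2^d) = B * (real k / 2^d) + B / N + B * (N / 2^d)"
    by (simp add: algebra_simps)
  also have "\<dots> \<le> \<epsilon>/8" using t1 t2 t3 eps by linarith
  finally have fin: "B * (real k/2^d + 1/N + N/2^d) \<le> \<epsilon>/8" .
  show ?thesis unfolding k_def[symmetric] N_def[symmetric] Bdef using fin by linarith
qed

lemma main_props:
  assumes eps: "0 < \<epsilon>" "\<epsilon> < 1"
    and hyp: "real t \<le> 1/300 * \<epsilon> powr (5/4) * 2 powr (real d / 4)"
  shows "one_sided_oer_linearity_tester d t \<epsilon> (tst d (kk t \<epsilon>) (RR \<epsilon>)) \<and>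
         (\<forall>qd\<in>set_pmf (tst d (kk t \<epsilon>) (RR \<epsilon>)). real (length (fst qd)) \<le> 600 / \<epsilon> * max 1 (ln (real t / \<epsilon>)))"
proof -
  define k where "k = kk t \<epsilon>"
  define R where "R = RR \<epsilon>"
  have Rb: "16 / \<epsilon> \<le> real R" "real R \<le> 17 / \<epsilon>" "1 \<le> R" using RR_bounds[OF eps] by (auto simp: R_def)
  have k2: "2 \<le> k"
  proof (cases "t = 0")
    case True then show ?thesis by (simp add: k_def kk_t0)
  next
    case False then show ?thesis using kk_props[OF eps, of t] by (simp add: k_def)
  qed
  define B where "B = t * Suc k * R"
  define \<gamma> where "\<gamma> = \<epsilon>/4 - real B * (real k/2^d + 1/real (card (Ev k)) + real (card (Ev k))/2^d)"
  have g8: "\<epsilon>/8 \<le> \<gamma>"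
  proof (cases "t = 0")
    case True then show ?thesis using eps by (simp add: \<gamma>_def B_def)
  next
    case False
    then have "1 \<le> t" by simp
    from gamma_ok[OF eps this hyp] show ?thesis by (simp add: \<gamma>_def B_def k_def R_def)
  qed
  have g4: "\<gamma> \<le> \<epsilon>/4"
  proof -
    have "0 \<le> real B * (real k/2^d + 1/real (card (Ev k)) + real (card (Ev k))/2^d)" by simp
    then show ?thesis by (simp add: \<gamma>_def)
  qed
  have cube: "\<forall>qd\<in>set_pmf (tst d k R). set (fst qd) \<subseteq> cube d"
    using tst_set by fastforce
  have lin: "accept_prob (tst d k R) f adv = 1" if "linear_fn d f" for f adv
    unfolding accept_prob_def
    by (rule prob_one) (auto simp: answers_eq intro: tst_linear[OF that])
  have far: "accept_prob (tst d k R) f adv \<le> 1/3" if adv: "erasure_adversary d t adv" and fr: "eps_far d \<epsilon> f" for f adv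
  proof -
    have "accept_prob (tst d k R) f adv = AP d k f adv R ([], {})"
      by (simp add: accept_prob_def AP_def answers_eq)
    also have "\<dots> \<le> (1 - \<gamma>)^R"
      by (rule AP_bound[OF adv fr eps k2 \<gamma>_def]) (use g8 eps in \<open>auto simp: B_def\<close>)
    also have "\<dots> \<le> (1 - \<epsilon>/8)^R" using g8 g4 eps by (intro power_mono) auto
    also have "\<dots> \<le> 1/3"
    proof -
      have b: "(1 - \<epsilon>/8)^R * (1 + real R * (\<epsilon>/8)) \<le> 1" by (rule bern) (use eps in auto)
      have "2 \<le> real R * (\<epsilon>/8)" using Rb(1) eps by (simp add: field_simps)
      then have "(1 - \<epsilon>/8)^R * 3 \<le> (1 - \<epsilon>/8)^R * (1 + real R * (\<epsilon>/8))"
        using eps by (intro mult_left_mono) auto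
      then show ?thesis using b by linarith
    qed
    finally show ?thesis .
  qed
  have len: "real (length (fst qd)) \<le> 600 / \<epsilon> * max 1 (ln (real t / \<epsilon>))" if "qd \<in> set_pmf (tst d k R)" for qd
  proof -
    obtain qs dec where qd: "qd = (qs, dec)" by (cases qd)
    have "length qs = R * Suc k" using tst_set[of qs dec d k R] that qd by simp
    then have l: "real (length (fst qd)) = real R * (real k + 1)" by (simp add: qd algebra_simps)
    have M: "1 \<le> max 1 (ln (real t / \<epsilon>))" by simp
    show ?thesis
    proof (cases "t = 0")
      case True
      then have "k = 2" by (simp add: k_def kk_t0)
      then have "real (length (fst qd)) \<le> 17 / \<epsilon> * 3" using l Rb by simp
      also have "\<dots> \<le> 600 / \<epsilon>" using eps by (simp add: divide_right_mono)
      also have "\<dots> \<le> 600 / \<epsilon> * max 1 (ln (real t / \<epsilon>))"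
        using mult_left_mono[OF M, of "600/\<epsilon>"] eps by simp
      finally show ?thesis .
    next
      case False
      then have t1: "1 \<le> t" by simp
      have kb: "real k + 1 \<le> 8 * ln (real t / \<epsilon>) + 23" using kk_props[OF eps t1] by (simp add: k_def)
      have "8 * ln (real t / \<epsilon>) + 23 \<le> 31 * max 1 (ln (real t / \<epsilon>))" by simp
      then have kb2: "real k + 1 \<le> 31 * max 1 (ln (real t / \<epsilon>))" using kb by linarith
      have "real (length (fst qd)) \<le> 17 / \<epsilon> * (31 * max 1 (ln (real t / \<epsilon>)))"
        unfolding l using Rb kb2 eps by (intro mult_mono) auto
      also have "\<dots> \<le> 600 / \<epsilon> * max 1 (ln (real t / \<epsilon>))" using eps M by (simp add: field_simps)
      finally show ?thesis .
    qed
  qed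
  show ?thesis unfolding one_sided_oer_linearity_tester_def k_def[symmetric] R_def[symmetric]
    using cube lin far len by blast
qed

theorem theorem2p1:
  shows "\<exists>c0::real. 0 < c0 \<and> c0 < 1 \<and>
    (\<exists>C::real. \<exists>T :: nat \<Rightarrow> nat \<Rightarrow> real \<Rightarrow> nonadaptive_tester.
       \<forall>d t \<epsilon>. 0 < \<epsilon> \<longrightarrow> \<epsilon> < 1 \<longrightarrow>
          real t \<le> c0 * \<epsilon> powr (5/4) * 2 powr (real d / 4) \<longrightarrow>
            one_sided_oer_linearity_tester d t \<epsilon> (T d t \<epsilon>) \<and>
            (\<forall>qd\<in>set_pmf (T d t \<epsilon>).
               real (length (fst qd)) \<le> C / \<epsilon> * max 1 (ln (real t / \<epsilon>))))"
proof (intro exI conjI allI impI)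
  show "0 < (1/300::real)" by simp
  show "(1/300::real) < 1" by simp
  fix d t \<epsilon> assume "0 < \<epsilon>" "\<epsilon> < (1::real)" "real t \<le> 1/300 * \<epsilon> powr (5/4) * 2 powr (real d / 4)"
  then have m: "one_sided_oer_linearity_tester d t \<epsilon> (tst d (kk t \<epsilon>) (RR \<epsilon>)) \<and>
         (\<forall>qd\<in>set_pmf (tst d (kk t \<epsilon>) (RR \<epsilon>)). real (length (fst qd)) \<le> 600 / \<epsilon> * max 1 (ln (real t / \<epsilon>)))"
    by (rule main_props)
  show "one_sided_oer_linearity_tester d t \<epsilon> ((\<lambda>d t \<epsilon>. tst d (kk t \<epsilon>) (RR \<epsilon>)) d t \<epsilon>)" using m by simp
  show "\<forall>qd\<in>set_pmf ((\<lambda>d t \<epsilon>. tst d (kk t \<epsilon>) (RR \<epsilon>)) d t \<epsilon>). real (length (fst qd)) \<le> 600 / \<epsilon> * max 1 (ln (real t / \<epsilon>))"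
    using m by simp
qed

end
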